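(* Let $G$ be a finite solvable group such that every maximal subgroup of $G$ is either $2$-nilpotent or has prime index in $G$. Then ${\bf O}_{2',2,2',2}(G)=G$.
   Context: All groups are finite. A group is $2$-nilpotent if it has a normal Hall $2'$-subgroup. A maximal subgroup means a maximal proper subgroup. For a prime $p$, ${\bf O}_{p'}(G)$ is the largest normal $p'$-subgroup and ${\bf O}_p(G)$ the largest normal $p$-subgroup of $G$; the upper $p'p$-series is defined recursively: ${\bf O}_{p',p}(G)$ is the full preimage in $G$ of ${\bf O}_p(G/{\bf O}_{p'}(G))$, ${\bf O}_{p',p,p'}(G)$ is the full preimage of ${\bf O}_{p'}(G/{\bf O}_{p',p}(G))$, ${\bf O}_{p',p,p',p}(G)$ the full preimage of ${\bf O}_p(G/{\bf O}_{p',p,p'}(G))$, and so on. Here $p=2$. *)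

theory Defs
  imports "HOL-Algebra.Algebra"
begin

definition is_p_set :: "nat \<Rightarrow> 'a set \<Rightarrow> bool" where
  "is_p_set p H \<longleftrightarrow> (\<exists>n. card H = p ^ n)"

definition is_p'_set :: "nat \<Rightarrow> 'a set \<Rightarrow> bool" where
  "is_p'_set p H \<longleftrightarrow> \<not> p dvd card H"

definition O_p :: "nat \<Rightarrow> ('a, 'b) monoid_scheme \<Rightarrow> 'a set" where
  "O_p p G = (THE H. H \<lhd> G \<and> is_p_set p H \<and>
                (\<forall>K. K \<lhd> G \<and> is_p_set p K \<longrightarrow> K \<subseteq> H))"

definition O_p' :: "nat \<Rightarrow> ('a, 'b) monoid_scheme \<Rightarrow> 'a set" where
  "O_p' p G = (THE H. H \<lhd> G \<and> is_p'_set p H \<and>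
                (\<forall>K. K \<lhd> G \<and> is_p'_set p K \<longrightarrow> K \<subseteq> H))"

text \<open>Upper p'p-series: full preimages (unions of cosets) of O_p / O_{p'} of quotients.\<close>
definition O_p'p :: "nat \<Rightarrow> ('a, 'b) monoid_scheme \<Rightarrow> 'a set" where
  "O_p'p p G = \<Union> (O_p p (G Mod (O_p' p G)))"

definition O_p'pp' :: "nat \<Rightarrow> ('a, 'b) monoid_scheme \<Rightarrow> 'a set" where
  "O_p'pp' p G = \<Union> (O_p' p (G Mod (O_p'p p G)))"

definition O_p'pp'p :: "nat \<Rightarrow> ('a, 'b) monoid_scheme \<Rightarrow> 'a set" where
  "O_p'pp'p p G = \<Union> (O_p p (G Mod (O_p'pp' p G)))"

definition maximal_subgroup :: "'a set \<Rightarrow> ('a, 'b) monoid_scheme \<Rightarrow> bool" where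
  "maximal_subgroup H G \<longleftrightarrow> subgroup H G \<and> H \<noteq> carrier G \<and>
     (\<forall>K. subgroup K G \<and> H \<subseteq> K \<longrightarrow> K = H \<or> K = carrier G)"

text \<open>A finite group is 2-nilpotent if it has a normal Hall 2'-subgroup
  (odd order, index a power of 2).\<close>
definition two_nilpotent :: "('a, 'b) monoid_scheme \<Rightarrow> bool" where
  "two_nilpotent G \<longleftrightarrow> (\<exists>N. N \<lhd> G \<and> odd (card N) \<and>
       (\<exists>k. card (carrier G) = card N * 2 ^ k))"

end

theory Submission
  imports Defs
begin


lemma card_fibres_const:
  assumes "finite A" "\<And>a. a \<in> A \<Longrightarrow> card {x\<in>A. f x = f a} = c"
  shows "card A = card (f ` A) * c"
proof -
  have A: "A = (\<Union>y\<in>f ` A. {x\<in>A. f x = y})" by auto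
  have "card (\<Union>y\<in>f ` A. {x\<in>A. f x = y}) = (\<Sum>y\<in>f ` A. card {x\<in>A. f x = y})"
    by (rule card_UN_disjoint) (use assms(1) in auto)
  also have "\<dots> = (\<Sum>y\<in>f ` A. c)"
    by (rule sum.cong) (auto simp: assms(2))
  finally show ?thesis using A by simp
qed

lemma (in group) card_set_mult:
  assumes H: "subgroup H G" and K: "subgroup K G" and fin: "finite (carrier G)"
  shows "card (H <#> K) * card (H \<inter> K) = card H * card K"
proof -
  have finH: "finite H" using H fin subgroup.subset finite_subset by metis
  have finK: "finite K" using K fin subgroup.subset finite_subset by metis
  let ?f = "\<lambda>(h,k). h \<otimes> k"
  have img: "?f ` (H \<times> K) = H <#> K"
    unfolding set_mult_def by auto
  have fib: "card {x\<in>H \<times> K. ?f x = ?f a} = card (H \<inter> K)" if a: "a \<in> H \<times> K" for a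
  proof -
    obtain h k where hk: "a = (h,k)" "h \<in> H" "k \<in> K" using a by auto
    have hG: "h \<in> carrier G" and kG: "k \<in> carrier G"
      using hk H K subgroup.mem_carrier by metis+
    let ?g = "\<lambda>d. (h \<otimes> d, inv d \<otimes> k)"
    have "{x\<in>H \<times> K. ?f x = ?f a} = ?g ` (H \<inter> K)"
    proof
      show "{x\<in>H \<times> K. ?f x = ?f a} \<subseteq> ?g ` (H \<inter> K)"
      proof
        fix x assume x: "x \<in> {x\<in>H \<times> K. ?f x = ?f a}"
        then obtain h' k' where x': "x = (h',k')" "h' \<in> H" "k' \<in> K" "h' \<otimes> k' = h \<otimes> k"
          using hk by auto
        have h'G: "h' \<in> carrier G" and k'G: "k' \<in> carrier G"
          using x' H K subgroup.mem_carrier by metis+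
        let ?d = "inv h \<otimes> h'"
        have d1: "?d \<in> H" using x' hk H by (simp add: subgroup.m_closed subgroup.m_inv_closed)
        have "?d = k \<otimes> inv k'"
        proof -
          have "inv h \<otimes> (h' \<otimes> k') \<otimes> inv k' = inv h \<otimes> (h \<otimes> k) \<otimes> inv k'" using x' by simp
          thus ?thesis using hG kG h'G k'G by (simp add: m_assoc) (simp add: m_assoc[symmetric])
        qed
        hence d2: "?d \<in> K" using x' hk K by (simp add: subgroup.m_closed subgroup.m_inv_closed)
        have "h \<otimes> ?d = h'" using hG h'G by (simp add: m_assoc[symmetric])
        moreover have "inv ?d \<otimes> k = k'"
          using \<open>?d = k \<otimes> inv k'\<close> kG k'G by (simp add: inv_mult_group m_assoc)
        ultimately show "x \<in> ?g ` (H \<inter> K)" using d1 d2 x' by force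
      qed
    next
      show "?g ` (H \<inter> K) \<subseteq> {x\<in>H \<times> K. ?f x = ?f a}"
      proof
        fix x assume "x \<in> ?g ` (H \<inter> K)"
        then obtain d where d: "d \<in> H" "d \<in> K" "x = ?g d" by auto
        have dG: "d \<in> carrier G" using d H subgroup.mem_carrier by metis
        have "h \<otimes> d \<in> H" "inv d \<otimes> k \<in> K" using d hk H K
          by (auto simp: subgroup.m_closed subgroup.m_inv_closed)
        moreover have "h \<otimes> d \<otimes> (inv d \<otimes> k) = h \<otimes> k" using dG hG kG
          by (simp add: m_assoc[symmetric]) (simp add: m_assoc)
        ultimately show "x \<in> {x\<in>H \<times> K. ?f x = ?f a}" using d hk by auto
      qed
    qed
    moreover have "inj_on ?g (H \<inter> K)"
    proof (rule inj_onI)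
      fix d d' assume "d \<in> H \<inter> K" "d' \<in> H \<inter> K" "?g d = ?g d'"
      thus "d = d'" using hG H subgroup.mem_carrier by (metis IntD1 Pair_inject l_cancel)
    qed
    ultimately show ?thesis by (simp add: card_image)
  qed
  have "card (H \<times> K) = card (?f ` (H \<times> K)) * card (H \<inter> K)"
    by (rule card_fibres_const) (use finH finK fib in auto)
  thus ?thesis using img by (simp add: card_cartesian_product)
qed



locale fgroup = group +
  assumes fin: "finite (carrier G)"
begin

lemma sub_finite: "subgroup H G \<Longrightarrow> finite H"
  using fin subgroup.subset finite_subset by metis

lemma card_sub_pos: "subgroup H G \<Longrightarrow> card H > 0"
  using sub_finite subgroup.one_closed card_gt_0_iff by fastforce

lemma card_sub_dvd:
  assumes "subgroup H G" "subgroup K G" "H \<subseteq> K"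
  shows "card H dvd card K"
proof -
  interpret K: group "G\<lparr>carrier := K\<rparr>" using assms(2) subgroup_imp_group by blast
  have "subgroup H (G\<lparr>carrier := K\<rparr>)" using subgroup_incl assms by blast
  from K.lagrange[OF this] show ?thesis unfolding order_def by (metis dvd_triv_right partial_object.select_convs(1) partial_object.surjective partial_object.update_convs(1))
qed

lemma card_sub_dvd_G:
  assumes "subgroup H G"
  shows "card H dvd card (carrier G)"
  using card_sub_dvd[OF assms subgroup_self] subgroup.subset[OF assms] by blast

lemma sub_card_eq:
  assumes "subgroup K G" "H \<subseteq> K" "card H = card K"
  shows "H = K"
  using sub_finite[OF assms(1)] assms card_subset_eq by blast

lemma normal_mult_sub:
  assumes "N \<lhd> G" "subgroup S G"
  shows "subgroup (N <#> S) G"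
  using assms second_isomorphism_grp.normal_set_mult_subgroup
  unfolding second_isomorphism_grp_def second_isomorphism_grp_axioms_def by blast

lemma mult_sub_left:
  assumes "subgroup N G" "subgroup S G"
  shows "N \<subseteq> N <#> S"
proof
  fix x assume "x \<in> N"
  hence "x \<otimes> \<one> \<in> N <#> S" using assms unfolding set_mult_def by (auto intro!: subgroup.one_closed)
  thus "x \<in> N <#> S" using \<open>x \<in> N\<close> assms(1) subgroup.mem_carrier by fastforce
qed

lemma mult_sub_right:
  assumes "subgroup N G" "subgroup S G"
  shows "S \<subseteq> N <#> S"
proof
  fix x assume "x \<in> S"
  hence "\<one> \<otimes> x \<in> N <#> S" using assms unfolding set_mult_def by (auto intro!: subgroup.one_closed)
  thus "x \<in> N <#> S" using \<open>x \<in> S\<close> assms(2) subgroup.mem_carrier by fastforce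
qed

lemma mult_sub_le:
  assumes "subgroup L G" "N \<subseteq> L" "S \<subseteq> L"
  shows "N <#> S \<subseteq> L"
  using assms unfolding set_mult_def by (auto intro: subgroup.m_closed)

lemma normal_conj:
  assumes "N \<lhd> G" "g \<in> carrier G" "n \<in> N"
  shows "g \<otimes> n \<otimes> inv g \<in> N"
  using assms normal_inv_iff by blast

lemma card_img_coset:
  assumes N: "N \<lhd> G" and S: "subgroup S G"
  shows "card ((\<lambda>x. N #> x) ` S) * card (S \<inter> N) = card S"
proof -
  have NG: "subgroup N G" using N normal_imp_subgroup by blast
  have fib: "card {x\<in>S. N #> x = N #> s} = card (S \<inter> N)" if s: "s \<in> S" for s
  proof -
    have sG: "s \<in> carrier G" using s S subgroup.mem_carrier by metis
    have "{x\<in>S. N #> x = N #> s} = (\<lambda>d. d \<otimes> s) ` (S \<inter> N)"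
    proof
      show "{x\<in>S. N #> x = N #> s} \<subseteq> (\<lambda>d. d \<otimes> s) ` (S \<inter> N)"
      proof
        fix x assume x: "x \<in> {x\<in>S. N #> x = N #> s}"
        hence xG: "x \<in> carrier G" using S subgroup.mem_carrier by force
        have "x \<in> N #> s" using x rcos_self[OF xG NG] by auto
        then obtain n where n: "n \<in> N" "x = n \<otimes> s" unfolding r_coset_def by auto
        have nG: "n \<in> carrier G" using n NG subgroup.mem_carrier by metis
        have "n = x \<otimes> inv s" using n nG sG by (simp add: m_assoc)
        hence "n \<in> S" using x s S by (auto intro: subgroup.m_closed subgroup.m_inv_closed)
        thus "x \<in> (\<lambda>d. d \<otimes> s) ` (S \<inter> N)" using n by auto
      qed
    next
      show "(\<lambda>d. d \<otimes> s) ` (S \<inter> N) \<subseteq> {x\<in>S. N #> x = N #> s}"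
      proof
        fix x assume "x \<in> (\<lambda>d. d \<otimes> s) ` (S \<inter> N)"
        then obtain d where d: "d \<in> S" "d \<in> N" "x = d \<otimes> s" by auto
        have "x \<in> S" using d s S subgroup.m_closed by metis
        moreover have "x \<in> N #> s" using d sG NG rcosI subgroup.subset by metis
        hence "N #> s = N #> x" using repr_independence sG NG by blast
        ultimately show "x \<in> {x\<in>S. N #> x = N #> s}" by auto
      qed
    qed
    moreover have "inj_on (\<lambda>d. d \<otimes> s) (S \<inter> N)"
      by (rule inj_onI) (use sG S subgroup.mem_carrier in \<open>metis IntD1 r_cancel\<close>)
    ultimately show ?thesis by (simp add: card_image)
  qed
  show ?thesis
    using card_fibres_const[of S "\<lambda>x. N #> x" "card (S \<inter> N)"] sub_finite[OF S] fib by auto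
qed

end


context fgroup begin

lemma O_gen:
  assumes P1: "P (1::nat)"
    and Pc: "\<And>a b c d. P a \<Longrightarrow> P b \<Longrightarrow> c * d = a * b \<Longrightarrow> P c"
  shows "\<exists>H. H \<lhd> G \<and> P (card H) \<and> (\<forall>K. K \<lhd> G \<and> P (card K) \<longrightarrow> K \<subseteq> H)"
proof -
  let ?S = "{H. H \<lhd> G \<and> P (card H)}"
  have finS: "finite ?S"
  proof (rule finite_subset[of _ "Pow (carrier G)"])
    show "?S \<subseteq> Pow (carrier G)" using normal_imp_subgroup subgroup.subset by blast
  qed (use fin in simp)
  have "{\<one>} \<in> ?S" using one_is_normal P1 by simp
  hence ne: "?S \<noteq> {}" by blast
  obtain H where H: "H \<in> ?S" "\<And>K. K \<in> ?S \<Longrightarrow> card K \<le> card H"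
  proof -
    have "Max (card ` ?S) \<in> card ` ?S" using finS ne by (intro Max_in) auto
    then obtain H where "H \<in> ?S" "card H = Max (card ` ?S)" by auto
    moreover have "\<And>K. K \<in> ?S \<Longrightarrow> card K \<le> Max (card ` ?S)" using finS by (intro Max_ge) auto
    ultimately show ?thesis using that by metis
  qed
  have "K \<subseteq> H" if K: "K \<lhd> G" "P (card K)" for K
  proof -
    have HK: "H <#> K \<lhd> G" using normal_subgroup_set_mult_closed H(1) K by blast
    have "card (H <#> K) * card (H \<inter> K) = card H * card K"
      using card_set_mult H(1) K normal_imp_subgroup fin by blast
    hence "P (card (H <#> K))" using Pc H(1) K by blast
    hence "card (H <#> K) \<le> card H" using H(2) HK by blast
    moreover have "H \<subseteq> H <#> K" using mult_sub_left H(1) K normal_imp_subgroup by blast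
    moreover have "finite (H <#> K)" using sub_finite HK normal_imp_subgroup by blast
    ultimately have "H = H <#> K"
      using card_seteq by blast
    thus ?thesis using mult_sub_right H(1) K normal_imp_subgroup by blast
  qed
  thus ?thesis using H(1) by blast
qed

lemma O_p_props:
  "O_p 2 G \<lhd> G \<and> is_p_set 2 (O_p 2 G) \<and> (\<forall>K. K \<lhd> G \<and> is_p_set 2 K \<longrightarrow> K \<subseteq> O_p 2 G)"
proof -
  have "\<exists>H. H \<lhd> G \<and> (\<lambda>c. \<exists>n. c = (2::nat)^n) (card H) \<and>
     (\<forall>K. K \<lhd> G \<and> (\<lambda>c. \<exists>n. c = (2::nat)^n) (card K) \<longrightarrow> K \<subseteq> H)"
  proof (rule O_gen)
    show "\<exists>n. (1::nat) = 2 ^ n" by (rule exI[of _ 0]) simp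
  next
    fix a b c d :: nat assume "\<exists>n. a = 2 ^ n" "\<exists>n. b = 2 ^ n" "c * d = a * b"
    then obtain i j where "c * d = 2 ^ (i + j)" by (auto simp: power_add)
    hence "c dvd 2 ^ (i+j)" by (metis dvd_triv_left)
    thus "\<exists>n. c = 2 ^ n" using divides_primepow_nat[of 2] by auto
  qed
  then obtain H where H: "H \<lhd> G \<and> is_p_set 2 H \<and> (\<forall>K. K \<lhd> G \<and> is_p_set 2 K \<longrightarrow> K \<subseteq> H)"
    unfolding is_p_set_def by blast
  have "O_p 2 G = H" unfolding O_p_def
    by (rule the_equality) (use H in blast, use H in blast)
  thus ?thesis using H by simp
qed

lemma O_p'_props:
  "O_p' 2 G \<lhd> G \<and> is_p'_set 2 (O_p' 2 G) \<and> (\<forall>K. K \<lhd> G \<and> is_p'_set 2 K \<longrightarrow> K \<subseteq> O_p' 2 G)"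
proof -
  have "\<exists>H. H \<lhd> G \<and> (\<lambda>c. \<not> (2::nat) dvd c) (card H) \<and>
     (\<forall>K. K \<lhd> G \<and> (\<lambda>c. \<not> (2::nat) dvd c) (card K) \<longrightarrow> K \<subseteq> H)"
  proof (rule O_gen)
    show "\<not> 2 dvd (1::nat)" by simp
  next
    fix a b c d :: nat assume "\<not> 2 dvd a" "\<not> 2 dvd b" "c * d = a * b"
    thus "\<not> 2 dvd c" by (metis dvd_mult2 even_mult_iff)
  qed
  then obtain H where H: "H \<lhd> G \<and> is_p'_set 2 H \<and> (\<forall>K. K \<lhd> G \<and> is_p'_set 2 K \<longrightarrow> K \<subseteq> H)"
    unfolding is_p'_set_def by blast
  have "O_p' 2 G = H" unfolding O_p'_def
    by (rule the_equality) (use H in blast, use H in blast)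
  thus ?thesis using H by simp
qed

end


context fgroup begin

lemma quot_fgroup:
  assumes "N \<lhd> G" shows "fgroup (G Mod N)"
proof -
  have "group (G Mod N)" using assms normal.factorgroup_is_group by blast
  moreover have "finite (carrier (G Mod N))"
    unfolding carrier_FactGroup using fin by simp
  ultimately show ?thesis unfolding fgroup_def fgroup_axioms_def by blast
qed

lemma img_normal:
  assumes N: "N \<lhd> G" and B: "B \<lhd> G"
  shows "(\<lambda>x. N #> x) ` B \<lhd> G Mod N"
proof -
  have "group_hom G (G Mod N) (\<lambda>x. N #> x)"
    using N normal.r_coset_hom_Mod normal.factorgroup_is_group
    unfolding group_hom_def group_hom_axioms_def by (metis is_group)
  moreover have "(\<lambda>x. N #> x) ` carrier G = carrier (G Mod N)" by (simp add: carrier_FactGroup)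
  ultimately show ?thesis using B normal.surj_hom_normal_subgroup by blast
qed

lemma lift_sub:
  assumes N: "N \<lhd> G" and B: "subgroup B G" and Xs: "(\<lambda>x. N #> x) ` B \<subseteq> XX"
  shows "B \<subseteq> \<Union>XX"
proof
  fix x assume "x \<in> B"
  hence "x \<in> N #> x" using rcos_self B N normal_imp_subgroup subgroup.mem_carrier by metis
  thus "x \<in> \<Union>XX" using Xs \<open>x \<in> B\<close> by blast
qed

lemma img_card_dvd:
  assumes N: "N \<lhd> G" and B: "subgroup B G" and D: "subgroup D G" "D \<subseteq> B \<inter> N"
    and f: "card B = card D * f"
  shows "card ((\<lambda>x. N #> x) ` B) dvd f"
proof -
  have BN: "subgroup (B \<inter> N) G" using B N normal_imp_subgroup subgroups_Inter[of "{B,N}"] by auto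
  obtain t where t: "card (B \<inter> N) = card D * t" using card_sub_dvd[OF D(1) BN D(2)] by blast
  have "card ((\<lambda>x. N #> x) ` B) * card (B \<inter> N) = card B" using card_img_coset N B by blast
  hence "card D * (card ((\<lambda>x. N #> x) ` B) * t) = card D * f" using t f by (simp add: ac_simps)
  hence "card ((\<lambda>x. N #> x) ` B) * t = f" using card_sub_pos[OF D(1)] by simp
  thus ?thesis by (metis dvd_triv_left)
qed

lemma dvd_two_pow: "(c::nat) dvd 2 ^ k \<Longrightarrow> \<exists>n. c = 2 ^ n"
  using divides_primepow_nat[of 2] by auto

lemma chain_imp_O:
  assumes A: "A \<lhd> G" and B: "B \<lhd> G" and C: "C \<lhd> G" and AB: "A \<subseteq> B" and BC: "B \<subseteq> C"
    and oA: "odd (card A)" and kB: "card B = card A * 2^kb"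
    and mC: "odd m" "card C = card B * m" and kG: "card (carrier G) = card C * 2^kg"
  shows "O_p'pp'p 2 G = carrier G"
proof -
  let ?O1 = "O_p' 2 G"
  have O1: "?O1 \<lhd> G" and AO1: "A \<subseteq> ?O1" using O_p'_props A oA unfolding is_p'_set_def by auto
  interpret Q1: fgroup "G Mod ?O1" using quot_fgroup O1 by blast
  have B'n: "(\<lambda>x. ?O1 #> x) ` B \<lhd> G Mod ?O1" using img_normal O1 B by blast
  have "card ((\<lambda>x. ?O1 #> x) ` B) dvd 2^kb"
    using img_card_dvd[OF O1 normal_imp_subgroup[OF B] normal_imp_subgroup[OF A]] AB AO1 kB by blast
  hence "is_p_set 2 ((\<lambda>x. ?O1 #> x) ` B)" unfolding is_p_set_def using dvd_two_pow by blast
  hence "(\<lambda>x. ?O1 #> x) ` B \<subseteq> O_p 2 (G Mod ?O1)" using Q1.O_p_props B'n by blast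
  hence BP1: "B \<subseteq> O_p'p 2 G" unfolding O_p'p_def using lift_sub O1 normal_imp_subgroup[OF B] by blast
  have P1: "O_p'p 2 G \<lhd> G" unfolding O_p'p_def
    using normal.factgroup_subgroup_union_normal[OF O1] Q1.O_p_props by blast
  let ?P1 = "O_p'p 2 G"
  interpret Q2: fgroup "G Mod ?P1" using quot_fgroup P1 by blast
  have C'n: "(\<lambda>x. ?P1 #> x) ` C \<lhd> G Mod ?P1" using img_normal P1 C by blast
  have "card ((\<lambda>x. ?P1 #> x) ` C) dvd m"
    using img_card_dvd[OF P1 normal_imp_subgroup[OF C] normal_imp_subgroup[OF B]] BC BP1 mC by blast
  hence "is_p'_set 2 ((\<lambda>x. ?P1 #> x) ` C)" unfolding is_p'_set_def using mC(1) dvd_trans by blast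
  hence "(\<lambda>x. ?P1 #> x) ` C \<subseteq> O_p' 2 (G Mod ?P1)" using Q2.O_p'_props C'n by blast
  hence CP2: "C \<subseteq> O_p'pp' 2 G" unfolding O_p'pp'_def using lift_sub P1 normal_imp_subgroup[OF C] by blast
  have P2: "O_p'pp' 2 G \<lhd> G" unfolding O_p'pp'_def
    using normal.factgroup_subgroup_union_normal[OF P1] Q2.O_p'_props by blast
  let ?P2 = "O_p'pp' 2 G"
  interpret Q3: fgroup "G Mod ?P2" using quot_fgroup P2 by blast
  have car: "carrier (G Mod ?P2) = (\<lambda>x. ?P2 #> x) ` carrier G" by (simp add: carrier_FactGroup)
  have "card ((\<lambda>x. ?P2 #> x) ` carrier G) dvd 2^kg"
    using img_card_dvd[OF P2 subgroup_self normal_imp_subgroup[OF C]] CP2 kG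
      normal_imp_subgroup[OF C] subgroup.subset by blast
  hence "is_p_set 2 (carrier (G Mod ?P2))" unfolding is_p_set_def car using dvd_two_pow by blast
  hence "carrier (G Mod ?P2) \<subseteq> O_p 2 (G Mod ?P2)" using Q3.O_p_props Q3.normal_self by blast
  moreover have "O_p 2 (G Mod ?P2) \<subseteq> carrier (G Mod ?P2)"
    using Q3.O_p_props normal_imp_subgroup subgroup.subset by blast
  ultimately have "O_p 2 (G Mod ?P2) = rcosets ?P2" unfolding FactGroup_def by auto
  thus ?thesis unfolding O_p'pp'p_def using rcosets_part_G P2 normal_imp_subgroup by metis
qed

end


context group begin
lemma inv_cancel_l [simp]: "x \<in> carrier G \<Longrightarrow> y \<in> carrier G \<Longrightarrow> inv x \<otimes> (x \<otimes> y) = y"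
  by (simp add: m_assoc[symmetric])
lemma inv_cancel_r [simp]: "x \<in> carrier G \<Longrightarrow> y \<in> carrier G \<Longrightarrow> x \<otimes> (inv x \<otimes> y) = y"
  by (simp add: m_assoc[symmetric])
end

context fgroup begin

lemma sylow_exists:
  assumes W: "subgroup W G" and r: "Factorial_Ring.prime r" and c: "card W = r^a * m"
  shows "\<exists>P. subgroup P G \<and> P \<subseteq> W \<and> card P = r^a"
proof -
  interpret W: group "G\<lparr>carrier := W\<rparr>" using W subgroup_imp_group by blast
  have "\<exists>H. subgroup H (G\<lparr>carrier := W\<rparr>) \<and> card H = r^a"
    by (rule sylow_thm[OF r W.is_group]) (use c sub_finite[OF W] in \<open>auto simp: order_def\<close>)
  then obtain P where P: "subgroup P (G\<lparr>carrier := W\<rparr>)" "card P = r^a" by blast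
  have "subgroup P G" using incl_subgroup[OF W P(1)] .
  moreover have "P \<subseteq> W" using subgroup.subset[OF P(1)] by simp
  ultimately show ?thesis using P(2) by blast
qed

lemma pow_card_sub:
  assumes P: "subgroup P G" and x: "x \<in> P"
  shows "x [^] card P = \<one>"
proof -
  interpret P: group "G\<lparr>carrier := P\<rparr>" using P subgroup_imp_group by blast
  have "x [^]\<^bsub>G\<lparr>carrier := P\<rparr>\<^esub> order (G\<lparr>carrier := P\<rparr>) = \<one>\<^bsub>G\<lparr>carrier := P\<rparr>\<^esub>"
    using P.pow_order_eq_1 x by simp
  moreover have "x [^] card P = x [^]\<^bsub>G\<lparr>carrier := P\<rparr>\<^esub> card P" by (rule nat_pow_consistent)
  ultimately show ?thesis by (simp add: order_def)
qed

lemma conj_pow: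
  assumes "g \<in> carrier G" "v \<in> carrier G"
  shows "(g \<otimes> v \<otimes> inv g) [^] (n::nat) = g \<otimes> v [^] n \<otimes> inv g"
proof (induct n)
  case 0 thus ?case using assms by simp
next
  case (Suc n)
  have "(g \<otimes> v \<otimes> inv g) [^] Suc n = (g \<otimes> v [^] n \<otimes> inv g) \<otimes> (g \<otimes> v \<otimes> inv g)"
    using Suc by simp
  also have "\<dots> = g \<otimes> (v [^] n \<otimes> v) \<otimes> inv g" using assms by (simp add: m_assoc)
  finally show ?case by simp
qed

lemma minnormal_ppow:
  assumes solv: "solvable G" and V: "V \<lhd> G" and ne: "V \<noteq> {\<one>}"
    and minl: "\<And>U. U \<lhd> G \<Longrightarrow> U \<subseteq> V \<Longrightarrow> U = {\<one>} \<or> U = V"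
  shows "\<exists>r k. Factorial_Ring.prime r \<and> k > 0 \<and> card V = r^k"
proof -
  have VS: "subgroup V G" using V normal_imp_subgroup by blast
  have VG: "V \<subseteq> carrier G" using VS subgroup.subset by blast
  let ?D = "derived G V"
  have Dn: "?D \<lhd> G" using derived_is_normal V by blast
  have DV: "?D \<subseteq> V" using derived_incl[OF _ VS] by blast
  have "?D \<noteq> V"
  proof
    assume DeqV: "?D = V"
    have it: "(derived G ^^ n) V = V" for n by (induct n) (simp_all add: DeqV)
    obtain n where n: "(derived G ^^ n) (carrier G) = {\<one>}"
      using solv solvable_iff_trivial_derived_seq by blast
    have "(derived G ^^ n) V \<subseteq> (derived G ^^ n) (carrier G)" using mono_exp_of_derived VG by blast
    hence "V \<subseteq> {\<one>}" using it n by simp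
    thus False using ne subgroup.one_closed[OF VS] by blast
  qed
  hence D1: "?D = {\<one>}" using minl[OF Dn DV] by blast
  have comm: "v \<otimes> w = w \<otimes> v" if vw: "v \<in> V" "w \<in> V" for v w
  proof -
    have vG: "v \<in> carrier G" and wG: "w \<in> carrier G" using vw VG by auto
    have "v \<otimes> w \<otimes> inv v \<otimes> inv w \<in> derived_set G V" using vw by blast
    hence "v \<otimes> w \<otimes> inv v \<otimes> inv w \<in> ?D" unfolding derived_def by (rule generate.incl)
    hence e: "v \<otimes> w \<otimes> inv v \<otimes> inv w = \<one>" using D1 by blast
    have "v \<otimes> w = v \<otimes> w \<otimes> inv v \<otimes> inv w \<otimes> (w \<otimes> v)"
      using vG wG by (simp add: m_assoc)
    thus ?thesis using e wG vG by simp
  qed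
  have cV: "card V \<noteq> 1"
  proof
    assume "card V = 1"
    then obtain y where "V = {y}" using card_1_singletonE by blast
    thus False using ne subgroup.one_closed[OF VS] by blast
  qed
  obtain r where r: "Factorial_Ring.prime r" "r dvd card V" using prime_factor_nat[OF cV] by blast
  have cVpos: "card V > 0" using card_sub_pos VS by blast
  have cV0: "card V \<noteq> 0" using cVpos by simp
  have nur: "\<not> is_unit r" using r(1) not_prime_unit by blast
  obtain m where m: "card V = r ^ multiplicity r (card V) * m" "\<not> r dvd m"
    using multiplicity_decompose'[where x="card V" and p=r] cV0 nur by blast
  let ?a = "multiplicity r (card V)"
  have apos: "?a > 0"
  proof (rule ccontr)
    assume "\<not> ?a > 0" hence "card V = m" using m by simp
    thus False using r m by simp
  qed
  obtain P where P: "subgroup P G" "P \<subseteq> V" "card P = r^?a"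
    using sylow_exists[OF VS r(1) m(1)] by blast
  let ?U = "{v \<in> V. v [^] (r^?a) = \<one>}"
  have US: "subgroup ?U G"
  proof (rule subgroupI)
    show "?U \<subseteq> carrier G" using VG by auto
    show "?U \<noteq> {}" using subgroup.one_closed[OF VS] by auto
  next
    fix v assume "v \<in> ?U"
    thus "inv v \<in> ?U" using VG subgroup.m_inv_closed[OF VS] by (auto simp: nat_pow_inv)
  next
    fix v w assume "v \<in> ?U" "w \<in> ?U"
    hence vw: "v \<in> V" "w \<in> V" "v [^] (r^?a) = \<one>" "w [^] (r^?a) = \<one>" by auto
    have "(v \<otimes> w) [^] (r^?a) = v [^] (r^?a) \<otimes> w [^] (r^?a)"
      using pow_mult_distrib[OF comm[OF vw(1,2)]] vw VG by blast
    thus "v \<otimes> w \<in> ?U" using vw subgroup.m_closed[OF VS] by simp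
  qed
  have Un: "?U \<lhd> G"
    unfolding normal_inv_iff
  proof (intro conjI US ballI)
    fix g v assume g: "g \<in> carrier G" and v: "v \<in> ?U"
    have vG: "v \<in> carrier G" using v VG by auto
    have "g \<otimes> v \<otimes> inv g \<in> V" using normal_conj V g v by auto
    moreover have "(g \<otimes> v \<otimes> inv g) [^] (r^?a) = \<one>" using conj_pow[OF g vG] v g by simp
    ultimately show "g \<otimes> v \<otimes> inv g \<in> ?U" by simp
  qed
  have PU: "P \<subseteq> ?U"
  proof
    fix x assume x: "x \<in> P"
    have "x \<in> V" using P(2) x by blast
    moreover have "x [^] (r^?a) = \<one>" using pow_card_sub[OF P(1) x] P(3) by simp
    ultimately show "x \<in> ?U" by simp
  qed
  have "?U \<noteq> {\<one>}"
  proof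
    assume "?U = {\<one>}"
    hence "P \<subseteq> {\<one>}" using PU by simp
    hence "card P \<le> card {\<one>}" by (intro card_mono) auto
    hence "card P \<le> 1" by simp
    moreover have "r ^ ?a > 1" using one_less_power[OF prime_gt_1_nat[OF r(1)] apos] by simp
    ultimately show False using P(3) by simp
  qed
  hence UV: "?U = V" using minl[OF Un] by blast
  have "m = 1"
  proof (rule ccontr)
    assume "m \<noteq> 1"
    then obtain q where q: "Factorial_Ring.prime q" "q dvd m" using prime_factor_nat by blast
    have qr: "q \<noteq> r" using q m(2) by blast
    obtain m2 where m2: "card V = q ^ multiplicity q (card V) * m2" "\<not> q dvd m2"
      using multiplicity_decompose'[where x="card V" and p=q] cV0 not_prime_unit q(1) by blast
    let ?b = "multiplicity q (card V)"
    have bpos: "?b > 0"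
    proof (rule ccontr)
      assume "\<not> ?b > 0" hence "card V = m2" using m2 by simp
      moreover have "q dvd card V" using q(2) m(1) by (metis dvd_mult)
      ultimately show False using m2(2) by simp
    qed
    obtain Pq where Pq: "subgroup Pq G" "Pq \<subseteq> V" "card Pq = q^?b"
      using sylow_exists[OF VS q(1) m2(1)] by blast
    have "q ^ ?b > 1" using one_less_power[OF prime_gt_1_nat[OF q(1)] bpos] by simp
    hence "Pq \<noteq> {\<one>}" using Pq(3) by auto
    then obtain x where x: "x \<in> Pq" "x \<noteq> \<one>" using subgroup.one_closed[OF Pq(1)] by blast
    have xG: "x \<in> carrier G" using x Pq(2) VG by auto
    have "ord x dvd q^?b" using pow_card_sub[OF Pq(1) x(1)] Pq(3) pow_eq_id[OF xG] by simp
    moreover have "ord x dvd r^?a" using UV x Pq(2) pow_eq_id[OF xG] by blast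
    moreover have "coprime (q^?b) (r^?a)"
      using primes_coprime[OF q(1) r(1) qr] by simp
    ultimately have "ord x = 1" using coprime_common_divisor_nat by blast
    thus False using x ord_eq_1 xG by blast
  qed
  thus ?thesis using m(1) apos r(1) by auto
qed

end


context fgroup begin

lemma minover_ppow:
  assumes solv: "solvable G" and K: "K \<lhd> G" and W: "W \<lhd> G" and KW: "K \<subseteq> W" "K \<noteq> W"
    and minl: "\<And>Y. Y \<lhd> G \<Longrightarrow> K \<subseteq> Y \<Longrightarrow> Y \<subseteq> W \<Longrightarrow> Y = K \<or> Y = W"
  shows "\<exists>r k. Factorial_Ring.prime r \<and> k > 0 \<and> card W = card K * r^k"
proof -
  have KS: "subgroup K G" and WS: "subgroup W G" using K W normal_imp_subgroup by auto
  interpret Q: fgroup "G Mod K" using quot_fgroup K by blast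
  let ?V = "(\<lambda>x. K #> x) ` W"
  have Vn: "?V \<lhd> G Mod K" using img_normal K W by blast
  have hom: "group_hom G (G Mod K) (\<lambda>x. K #> x)"
    using K normal.r_coset_hom_Mod normal.factorgroup_is_group
    unfolding group_hom_def group_hom_axioms_def by (metis is_group)
  have solvQ: "solvable (G Mod K)"
    using group_hom.surj_hom_imp_solvable[OF hom _ solv] by (simp add: carrier_FactGroup)
  have Vne: "?V \<noteq> {\<one>\<^bsub>G Mod K\<^esub>}"
  proof
    assume a: "?V = {\<one>\<^bsub>G Mod K\<^esub>}"
    obtain w where w: "w \<in> W" "w \<notin> K" using KW by blast
    have wG: "w \<in> carrier G" using w WS subgroup.mem_carrier by metis
    have "K #> w = K" using a w by auto
    thus False using rcos_self[OF wG KS] w by simp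
  qed
  have cosW: "K #> w \<subseteq> W" if "w \<in> W" for w
    using that KW WS unfolding r_coset_def by (auto intro: subgroup.m_closed)
  have minV: "U = {\<one>\<^bsub>G Mod K\<^esub>} \<or> U = ?V" if U: "U \<lhd> G Mod K" "U \<subseteq> ?V" for U
  proof -
    have Yn: "\<Union>U \<lhd> G" using normal.factgroup_subgroup_union_normal[OF K U(1)] .
    have KU: "K \<in> U" using subgroup.one_closed[OF normal_imp_subgroup[OF U(1)]] by simp
    hence KY: "K \<subseteq> \<Union>U" by blast
    have YW: "\<Union>U \<subseteq> W" using U(2) cosW by blast
    from minl[OF Yn KY YW] show ?thesis
    proof
      assume Y: "\<Union>U = K"
      have "U \<subseteq> {K}"
      proof
        fix u assume u: "u \<in> U"
        then obtain w where w: "w \<in> W" "u = K #> w" using U(2) by blast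
        have wG: "w \<in> carrier G" using w WS subgroup.mem_carrier by metis
        have "w \<in> u" using w rcos_self[OF wG KS] by simp
        hence "w \<in> K" using Y u by blast
        thus "u \<in> {K}" using coset_join2[OF wG KS] w by simp
      qed
      thus ?thesis using KU by auto
    next
      assume Y: "\<Union>U = W"
      have "?V \<subseteq> U"
      proof
        fix v assume "v \<in> ?V"
        then obtain w where w: "w \<in> W" "v = K #> w" by blast
        have wG: "w \<in> carrier G" using w WS subgroup.mem_carrier by metis
        obtain u where u: "u \<in> U" "w \<in> u" using Y w by blast
        obtain w' where w': "w' \<in> W" "u = K #> w'" using U(2) u by blast
        have w'G: "w' \<in> carrier G" using w' WS subgroup.mem_carrier by metis
        have "K #> w' = K #> w" using repr_independence[OF _ w'G KS] u w' by simp
        thus "v \<in> U" using u w w' by simp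
      qed
      thus ?thesis using U(2) by blast
    qed
  qed
  obtain r k where rk: "Factorial_Ring.prime r" "k > 0" "card ?V = r^k"
    using Q.minnormal_ppow[OF solvQ Vn Vne minV] by blast
  have "card ?V * card (W \<inter> K) = card W" using card_img_coset K WS by blast
  moreover have "W \<inter> K = K" using KW by blast
  ultimately show ?thesis using rk by (metis mult.commute)
qed

end


context fgroup begin

definition conjs :: "'a \<Rightarrow> 'a set \<Rightarrow> 'a set" where
  "conjs g XX = (\<lambda>x. g \<otimes> x \<otimes> inv g) ` XX"

lemma conjs_sub:
  assumes XX: "subgroup XX G" and g: "g \<in> carrier G"
  shows "subgroup (conjs g XX) G"
proof (rule subgroupI)
  have XG: "XX \<subseteq> carrier G" using XX subgroup.subset by blast
  show "conjs g XX \<subseteq> carrier G" using XG g unfolding conjs_def by auto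
  show "conjs g XX \<noteq> {}" using subgroup.one_closed[OF XX] unfolding conjs_def by auto
next
  fix a assume "a \<in> conjs g XX"
  then obtain x where x: "x \<in> XX" "a = g \<otimes> x \<otimes> inv g" unfolding conjs_def by auto
  have xG: "x \<in> carrier G" using x XX subgroup.mem_carrier by metis
  have "inv a = g \<otimes> inv x \<otimes> inv g" using x xG g by (simp add: inv_mult_group m_assoc)
  moreover have "inv x \<in> XX" using x XX subgroup.m_inv_closed by metis
  ultimately show "inv a \<in> conjs g XX" unfolding conjs_def by auto
next
  fix a b assume "a \<in> conjs g XX" "b \<in> conjs g XX"
  then obtain x y where x: "x \<in> XX" "a = g \<otimes> x \<otimes> inv g" and y: "y \<in> XX" "b = g \<otimes> y \<otimes> inv g"
    unfolding conjs_def by auto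
  have xG: "x \<in> carrier G" using x XX subgroup.mem_carrier by metis
  have yG: "y \<in> carrier G" using y XX subgroup.mem_carrier by metis
  have "a \<otimes> b = g \<otimes> (x \<otimes> y) \<otimes> inv g" using x y xG yG g by (simp add: m_assoc)
  moreover have "x \<otimes> y \<in> XX" using x y XX subgroup.m_closed by metis
  ultimately show "a \<otimes> b \<in> conjs g XX" unfolding conjs_def by auto
qed

lemma conjs_card:
  assumes XX: "XX \<subseteq> carrier G" and g: "g \<in> carrier G"
  shows "card (conjs g XX) = card XX"
  unfolding conjs_def
proof (rule card_image, rule inj_onI)
  fix x y assume "x \<in> XX" "y \<in> XX" "g \<otimes> x \<otimes> inv g = g \<otimes> y \<otimes> inv g"
  thus "x = y" using conjugation_is_inj[OF g] XX by blast
qed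

lemma conjs_comp:
  assumes XX: "XX \<subseteq> carrier G" and g: "g \<in> carrier G" and h: "h \<in> carrier G"
  shows "conjs g (conjs h XX) = conjs (g \<otimes> h) XX"
proof -
  have "g \<otimes> (h \<otimes> x \<otimes> inv h) \<otimes> inv g = g \<otimes> h \<otimes> x \<otimes> inv (g \<otimes> h)" if "x \<in> XX" for x
    using that XX g h by (auto simp: m_assoc inv_mult_group)
  thus ?thesis unfolding conjs_def image_image by (auto simp: image_def)
qed

lemma conjs_one:
  assumes XX: "XX \<subseteq> carrier G"
  shows "conjs \<one> XX = XX"
proof -
  have "(\<lambda>x. \<one> \<otimes> x \<otimes> inv \<one>) ` XX = (\<lambda>x. x) ` XX" by (rule image_cong) (use XX in auto)
  thus ?thesis unfolding conjs_def by simp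
qed

lemma conjs_inv:
  assumes XX: "XX \<subseteq> carrier G" and g: "g \<in> carrier G" and e: "conjs g S = T" and S: "S \<subseteq> carrier G"
  shows "conjs (inv g) T = S"
  using e conjs_comp[OF S inv_closed[OF g] g] conjs_one[OF S] g by simp

lemma sylow_conj:
  assumes W: "subgroup W G" and S: "subgroup S G" and T: "subgroup T G" and SW: "S \<subseteq> W" and TW: "T \<subseteq> W"
    and r: "Factorial_Ring.prime r" and cS: "card S = r^a" and cT: "card T = r^a"
    and cW: "card W = r^a * m" and rm: "\<not> r dvd m"
  shows "\<exists>w\<in>W. T = conjs w S"
proof (rule ccontr)
  assume nc: "\<not> (\<exists>w\<in>W. T = conjs w S)"
  have WG: "W \<subseteq> carrier G" using W subgroup.subset by blast
  have SG: "S \<subseteq> carrier G" using S subgroup.subset by blast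
  have TG: "T \<subseteq> carrier G" using T subgroup.subset by blast
  define D where "D w = {s \<otimes> w \<otimes> t |s t. s \<in> S \<and> t \<in> T}" for w
  have Dcard: "r^(Suc a) dvd card (D w)" if w: "w \<in> W" for w
  proof -
    have wG: "w \<in> carrier G" using w WG by blast
    let ?C = "conjs w T"
    have CS: "subgroup ?C G" using conjs_sub[OF T wG] .
    have cC: "card ?C = r^a" using conjs_card[OF TG wG] cT by simp
    have eq: "D w = (\<lambda>x. x \<otimes> w) ` (S <#> ?C)"
    proof
      show "D w \<subseteq> (\<lambda>x. x \<otimes> w) ` (S <#> ?C)"
      proof
        fix y assume "y \<in> D w"
        then obtain s t where st: "s \<in> S" "t \<in> T" "y = s \<otimes> w \<otimes> t" unfolding D_def by auto
        have sG: "s \<in> carrier G" and tG: "t \<in> carrier G" using st SG TG by auto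
        have "y = (s \<otimes> (w \<otimes> t \<otimes> inv w)) \<otimes> w" using st sG tG wG by (simp add: m_assoc)
        moreover have "s \<otimes> (w \<otimes> t \<otimes> inv w) \<in> S <#> ?C" using st unfolding set_mult_def conjs_def by auto
        ultimately show "y \<in> (\<lambda>x. x \<otimes> w) ` (S <#> ?C)" by blast
      qed
    next
      show "(\<lambda>x. x \<otimes> w) ` (S <#> ?C) \<subseteq> D w"
      proof
        fix y assume "y \<in> (\<lambda>x. x \<otimes> w) ` (S <#> ?C)"
        then obtain s t where st: "s \<in> S" "t \<in> T" "y = s \<otimes> (w \<otimes> t \<otimes> inv w) \<otimes> w"
          unfolding set_mult_def conjs_def by auto
        have sG: "s \<in> carrier G" and tG: "t \<in> carrier G" using st SG TG by auto
        have "y = s \<otimes> w \<otimes> t" using st sG tG wG by (simp add: m_assoc)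
        thus "y \<in> D w" unfolding D_def using st by blast
      qed
    qed
    have "S <#> ?C \<subseteq> carrier G" using SG conjs_sub[OF T wG] subgroup.subset setmult_subset_G by metis
    hence cD: "card (D w) = card (S <#> ?C)" unfolding eq
      by (intro card_image inj_onI) (metis wG r_cancel subsetD)
    have pf: "card (S <#> ?C) * card (S \<inter> ?C) = r^a * r^a"
      using card_set_mult[OF S CS fin] cS cC by simp
    have SCS: "subgroup (S \<inter> ?C) G" using subgroups_Inter[of "{S, ?C}"] S CS by auto
    have "card (S \<inter> ?C) dvd r^a" using card_sub_dvd[OF SCS S] cS by simp
    then obtain cc where c: "cc \<le> a" "card (S \<inter> ?C) = r ^ cc" using divides_primepow_nat[OF r] by blast
    have "cc \<noteq> a"
    proof
      assume "cc = a"
      hence "S \<inter> ?C = ?C" using sub_card_eq[OF CS, of "S \<inter> ?C"] c cC by auto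
      hence "?C \<subseteq> S" by blast
      hence "?C = S" using sub_card_eq[OF S] cC cS by simp
      hence "T = conjs (inv w) S" using conjs_inv[OF TG wG _ TG] by simp
      moreover have "inv w \<in> W" using w W subgroup.m_inv_closed by metis
      ultimately show False using nc by blast
    qed
    hence ca: "cc < a" using c by simp
    have rpos: "r > 0" using r prime_gt_0_nat by blast
    have "card (S <#> ?C) * r ^ cc = r^(a + a - cc) * r ^ cc"
      using pf c ca by (simp add: power_add[symmetric])
    hence "card (S <#> ?C) = r^(a + a - cc)" using rpos by simp
    moreover have "r^(Suc a) dvd r^(a + a - cc)" using ca by (intro le_imp_power_dvd) simp
    ultimately show ?thesis using cD by simp
  qed
  have Dsub: "D w \<subseteq> W" if "w \<in> W" for w
    using that SW TW W unfolding D_def by (auto intro!: subgroup.m_closed)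
  have wD: "w \<in> D w" if "w \<in> W" for w
  proof -
    have "\<one> \<otimes> w \<otimes> \<one> \<in> D w" unfolding D_def using S T subgroup.one_closed by blast
    thus ?thesis using that WG by auto
  qed
  have Dmove: "D v \<subseteq> D w" if v: "v \<in> W" and w: "w \<in> W" and vD: "v \<in> D w" for v w
  proof
    fix y assume "y \<in> D v"
    then obtain s t where st: "s \<in> S" "t \<in> T" "y = s \<otimes> v \<otimes> t" unfolding D_def by auto
    obtain s' t' where st': "s' \<in> S" "t' \<in> T" "v = s' \<otimes> w \<otimes> t'" using vD unfolding D_def by auto
    have G: "s \<in> carrier G" "t \<in> carrier G" "s' \<in> carrier G" "t' \<in> carrier G" "w \<in> carrier G"
      using st st' SG TG w WG by auto
    have "y = (s \<otimes> s') \<otimes> w \<otimes> (t' \<otimes> t)" using st st' G by (simp add: m_assoc)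
    moreover have "s \<otimes> s' \<in> S" "t' \<otimes> t \<in> T" using st st' S T subgroup.m_closed by metis+
    ultimately show "y \<in> D w" unfolding D_def by blast
  qed
  have Dsym: "w \<in> D v" if v: "v \<in> W" and w: "w \<in> W" and vD: "v \<in> D w" for v w
  proof -
    obtain s' t' where st': "s' \<in> S" "t' \<in> T" "v = s' \<otimes> w \<otimes> t'" using vD unfolding D_def by auto
    have G: "s' \<in> carrier G" "t' \<in> carrier G" "w \<in> carrier G"
      using st' SG TG w WG by auto
    have "w = inv s' \<otimes> v \<otimes> inv t'" using st' G by (simp add: m_assoc)
    moreover have "inv s' \<in> S" "inv t' \<in> T" using st' S T subgroup.m_inv_closed by metis+
    ultimately show ?thesis unfolding D_def by blast
  qed
  have "r^(Suc a) dvd card (\<Union>(D ` W))"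
  proof (rule dvd_partition)
    show "finite (\<Union>(D ` W))" using Dsub sub_finite[OF W] by (meson UN_least finite_subset)
    show "\<forall>c\<in>D ` W. r ^ Suc a dvd card c" using Dcard by blast
    show "\<forall>c1\<in>D ` W. \<forall>c2\<in>D ` W. c1 \<noteq> c2 \<longrightarrow> c1 \<inter> c2 = {}"
    proof (intro ballI impI)
      fix c1 c2 assume c1: "c1 \<in> D ` W" and c2: "c2 \<in> D ` W" and ne: "c1 \<noteq> c2"
      obtain v w where vw: "v \<in> W" "w \<in> W" "c1 = D v" "c2 = D w" using c1 c2 by blast
      show "c1 \<inter> c2 = {}"
      proof (rule ccontr)
        assume "c1 \<inter> c2 \<noteq> {}"
        then obtain y where y: "y \<in> D v" "y \<in> D w" using vw by blast
        have yW: "y \<in> W" using y Dsub vw by blast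
        have "D y \<subseteq> D v" "D y \<subseteq> D w" using Dmove yW vw y by auto
        moreover have "v \<in> D y" "w \<in> D y" using Dsym yW vw y by auto
        hence "D v \<subseteq> D y" "D w \<subseteq> D y" using Dmove yW vw by auto
        ultimately show False using ne vw by auto
      qed
    qed
  qed
  moreover have "\<Union>(D ` W) = W" using Dsub wD by blast
  ultimately have "r * r^a dvd r^a * m" using cW by simp
  hence "r dvd m" using r prime_gt_0_nat by (simp add: mult.commute)
  thus False using rm by blast
qed

end


context fgroup begin

lemma exists_maximal:
  assumes L: "subgroup L G" "L \<noteq> carrier G"
  shows "\<exists>M. maximal_subgroup M G \<and> L \<subseteq> M"
proof -
  let ?S = "{H. subgroup H G \<and> L \<subseteq> H \<and> H \<noteq> carrier G}"
  have finS: "finite ?S"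
  proof (rule finite_subset[of _ "Pow (carrier G)"])
    show "?S \<subseteq> Pow (carrier G)" using subgroup.subset by blast
  qed (use fin in simp)
  have "L \<in> ?S" using L by simp
  hence ne: "?S \<noteq> {}" by blast
  have "Max (card ` ?S) \<in> card ` ?S" using finS ne by (intro Max_in) auto
  then obtain M where M: "M \<in> ?S" "card M = Max (card ` ?S)" by (rule imageE) simp
  have Mx: "card K \<le> card M" if K: "K \<in> ?S" for K
  proof -
    have "card K \<in> card ` ?S" using K by blast
    thus ?thesis using M(2) finS by simp
  qed
  have "maximal_subgroup M G" unfolding maximal_subgroup_def
  proof (intro conjI allI impI)
    show "subgroup M G" "M \<noteq> carrier G" using M by auto
  next
    fix K assume K: "subgroup K G \<and> M \<subseteq> K"
    show "K = M \<or> K = carrier G"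
    proof (cases "K = carrier G")
      case False
      hence "K \<in> ?S" using K M by auto
      hence cK: "card K \<le> card M" using Mx by blast
      have KS: "subgroup K G" and MK: "M \<subseteq> K" using K by auto
      have "M = K" using card_seteq[OF sub_finite[OF KS] MK cK] .
      thus ?thesis by simp
    qed simp
  qed
  moreover have "L \<subseteq> M" using M(1) by simp
  ultimately show ?thesis by blast
qed

lemma idx2:
  assumes H: "subgroup H G" and N: "subgroup N G" and HN: "H \<subseteq> N" and c: "card N = 2 * card H"
    and x: "x \<in> N" "x \<notin> H" and z: "z \<in> N" "z \<notin> H"
  shows "z \<otimes> inv x \<in> H"
proof -
  have xG: "x \<in> carrier G" using x N subgroup.mem_carrier by metis
  have HG: "H \<subseteq> carrier G" using H subgroup.subset by blast
  have sub: "H #> x \<subseteq> N" using HN x N unfolding r_coset_def by (auto intro: subgroup.m_closed)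
  have disj: "H \<inter> (H #> x) = {}"
  proof (rule ccontr)
    assume "H \<inter> (H #> x) \<noteq> {}"
    then obtain y where y: "y \<in> H" "y \<in> H #> x" by blast
    then obtain h where hy: "h \<in> H" "y = h \<otimes> x" unfolding r_coset_def by blast
    have hG: "h \<in> carrier G" using hy HG by auto
    have "x = inv h \<otimes> y" using hy hG xG by simp
    hence "x \<in> H" using hy y H subgroup.m_closed subgroup.m_inv_closed by metis
    thus False using x by blast
  qed
  have cx: "card (H #> x) = card H"
  proof -
    have "H #> x = (\<lambda>h. h \<otimes> x) ` H" unfolding r_coset_def by auto
    moreover have "inj_on (\<lambda>h. h \<otimes> x) H"
    proof (rule inj_onI)
      fix a b assume "a \<in> H" "b \<in> H" "a \<otimes> x = b \<otimes> x"
      thus "a = b" using HG xG r_cancel by blast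
    qed
    ultimately show ?thesis by (simp add: card_image)
  qed
  have finH: "finite H" using sub_finite H by blast
  have finHx: "finite (H #> x)" using sub_finite[OF N] sub finite_subset by blast
  have cu: "card (H \<union> (H #> x)) = card N" using card_Un_disjoint[OF finH finHx disj] cx c by simp
  have su: "H \<union> (H #> x) \<subseteq> N" using sub HN by blast
  have "H \<union> (H #> x) = N" using card_seteq[OF sub_finite[OF N] su] cu by simp
  hence "z \<in> H #> x" using z by blast
  then obtain h where h: "h \<in> H" "z = h \<otimes> x" unfolding r_coset_def by auto
  have hG: "h \<in> carrier G" using h HG by blast
  have "z \<otimes> inv x = h" using h xG hG by (simp add: m_assoc)
  thus ?thesis using h by simp
qed

lemma idx2_normal:
  assumes H: "subgroup H G" and N: "subgroup N G" and HN: "H \<subseteq> N" and c: "card N = 2 * card H"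
    and n: "n \<in> N" and h: "h \<in> H"
  shows "n \<otimes> h \<otimes> inv n \<in> H"
proof (cases "n \<in> H")
  case True thus ?thesis using h H by (metis subgroup.m_closed subgroup.m_inv_closed)
next
  case False
  have nG: "n \<in> carrier G" and hG: "h \<in> carrier G" using n h N H subgroup.mem_carrier by metis+
  have "n \<otimes> h \<in> N" using n h HN N subgroup.m_closed by (metis subsetD)
  moreover have "n \<otimes> h \<notin> H"
  proof
    assume "n \<otimes> h \<in> H"
    hence "n \<otimes> h \<otimes> inv h \<in> H" using h H by (metis subgroup.m_closed subgroup.m_inv_closed)
    thus False using False nG hG by (simp add: m_assoc)
  qed
  ultimately show ?thesis using idx2[OF H N HN c n False] by blast
qed

lemma conjs_normal:
  assumes K: "K \<lhd> G" and g: "g \<in> carrier G"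
  shows "conjs g K = K"
proof -
  have KG: "K \<subseteq> carrier G" using K normal_imp_subgroup subgroup.subset by blast
  have s: "conjs g K \<subseteq> K" unfolding conjs_def using normal_conj[OF K g] by auto
  show ?thesis using card_seteq[OF sub_finite[OF normal_imp_subgroup[OF K]] s] conjs_card[OF KG g] by simp
qed

lemma conjs_sub_eq:
  assumes T: "subgroup T G" and g: "g \<in> carrier G" and s: "\<And>t. t \<in> T \<Longrightarrow> g \<otimes> t \<otimes> inv g \<in> T"
  shows "conjs g T = T"
proof -
  have TG: "T \<subseteq> carrier G" using T subgroup.subset by blast
  have s2: "conjs g T \<subseteq> T" unfolding conjs_def using s by auto
  show ?thesis using card_seteq[OF sub_finite[OF T] s2] conjs_card[OF TG g] by simp
qed

definition nrm :: "'a set \<Rightarrow> 'a set" where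
  "nrm T = {g \<in> carrier G. conjs g T = T}"

lemma nrm_sub:
  assumes T: "T \<subseteq> carrier G"
  shows "subgroup (nrm T) G"
proof (rule subgroupI)
  show "nrm T \<subseteq> carrier G" unfolding nrm_def by auto
  show "nrm T \<noteq> {}" using conjs_one[OF T] unfolding nrm_def by auto
next
  fix g assume "g \<in> nrm T"
  thus "inv g \<in> nrm T" using conjs_inv[OF T _ _ T] unfolding nrm_def by auto
next
  fix g h assume g: "g \<in> nrm T" and h: "h \<in> nrm T"
  hence gG: "g \<in> carrier G" and hG: "h \<in> carrier G" and e: "conjs g T = T" "conjs h T = T"
    unfolding nrm_def by auto
  have "conjs (g \<otimes> h) T = conjs g (conjs h T)" using conjs_comp[OF T gG hG] by simp
  also have "\<dots> = T" using e by simp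
  finally show "g \<otimes> h \<in> nrm T" unfolding nrm_def using gG hG by auto
qed

lemma conj_mem:
  assumes "g \<in> carrier G" "x \<in> XX"
  shows "g \<otimes> x \<otimes> inv g \<in> conjs g XX"
  using assms unfolding conjs_def by auto

end


context fgroup begin

definition chain_from :: "'a set \<Rightarrow> bool" where
  "chain_from K \<longleftrightarrow> (\<exists>A B C. A \<lhd> G \<and> B \<lhd> G \<and> C \<lhd> G \<and> K \<subseteq> A \<and> A \<subseteq> B \<and> B \<subseteq> C \<and>
     (\<exists>m. odd m \<and> card A = card K * m) \<and> (\<exists>k. card B = card A * 2^k) \<and>
     (\<exists>m. odd m \<and> card C = card B * m) \<and> (\<exists>k. card (carrier G) = card C * 2^k))"

lemma sub_inter: "subgroup H G \<Longrightarrow> subgroup K G \<Longrightarrow> subgroup (H \<inter> K) G"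
  using subgroups_Inter[of "{H, K}"] by auto

lemma case_ia:
  assumes K: "K \<lhd> G" and N: "N \<lhd> G" and KN: "K \<subseteq> N" and cN: "card N = card K * 2^kN"
    and M: "maximal_subgroup M G" and KM: "K \<subseteq> M" and NM: "\<not> N \<subseteq> M"
    and tn: "two_nilpotent (G\<lparr>carrier := M\<rparr>)"
  shows "chain_from K"
proof -
  have MS: "subgroup M G" using M unfolding maximal_subgroup_def by blast
  have NS: "subgroup N G" and KS: "subgroup K G" using N K normal_imp_subgroup by auto
  have MG: "M \<subseteq> carrier G" using MS subgroup.subset by blast
  have NMS: "subgroup (N <#> M) G" using normal_mult_sub[OF N MS] .
  have "N <#> M = M \<or> N <#> M = carrier G"
    using M mult_sub_right[OF NS MS] NMS unfolding maximal_subgroup_def by blast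
  moreover have "N <#> M \<noteq> M" using mult_sub_left[OF NS MS] NM by blast
  ultimately have GNM: "N <#> M = carrier G" by blast
  obtain X0 k where X0: "X0 \<lhd> G\<lparr>carrier := M\<rparr>" "odd (card X0)" "card M = card X0 * 2^k"
    using tn unfolding two_nilpotent_def by auto
  interpret Mg: group "G\<lparr>carrier := M\<rparr>" using subgroup_imp_group[OF MS] .
  have X0M: "subgroup X0 (G\<lparr>carrier := M\<rparr>)" using X0(1) normal_imp_subgroup by blast
  have X0S: "subgroup X0 G" using incl_subgroup[OF MS X0M] .
  have X0sub: "X0 \<subseteq> M" using subgroup.subset[OF X0M] by simp
  have xc: "m \<otimes> h \<otimes> inv m \<in> X0" if m: "m \<in> M" and h: "h \<in> X0" for m h
  proof -
    have "m \<otimes>\<^bsub>G\<lparr>carrier := M\<rparr>\<^esub> h \<otimes>\<^bsub>G\<lparr>carrier := M\<rparr>\<^esub> inv\<^bsub>G\<lparr>carrier := M\<rparr>\<^esub> m \<in> X0"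
      using X0(1) Mg.normal_inv_iff m h by simp
    thus ?thesis using m_inv_consistent[OF MS m] by simp
  qed
  let ?C = "N <#> X0"
  have CS: "subgroup ?C G" using normal_mult_sub[OF N X0S] .
  have Cn: "?C \<lhd> G"
    unfolding normal_inv_iff
  proof (intro conjI CS ballI)
    fix g c assume g: "g \<in> carrier G" and c: "c \<in> ?C"
    have "g \<in> N <#> M" using g GNM by simp
    then obtain n m where nm: "n \<in> N" "m \<in> M" "g = n \<otimes> m" unfolding set_mult_def by blast
    obtain n1 x where nx: "n1 \<in> N" "x \<in> X0" "c = n1 \<otimes> x" using c unfolding set_mult_def by auto
    have G1: "n \<in> carrier G" "m \<in> carrier G" "n1 \<in> carrier G" "x \<in> carrier G"
      using nm nx NS MS X0S subgroup.mem_carrier by metis+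
    define x' where "x' = m \<otimes> x \<otimes> inv m"
    have x'X: "x' \<in> X0" unfolding x'_def using xc nm nx by blast
    have x'G: "x' \<in> carrier G" using x'X X0S subgroup.mem_carrier by metis
    have n1': "m \<otimes> n1 \<otimes> inv m \<in> N" using normal_conj[OF N G1(2) nx(1)] .
    have n2: "x' \<otimes> inv n \<otimes> inv x' \<in> N" using normal_conj[OF N x'G] nm NS subgroup.m_inv_closed by metis
    have nn: "n \<otimes> (m \<otimes> n1 \<otimes> inv m) \<otimes> (x' \<otimes> inv n \<otimes> inv x') \<in> N"
      using nm(1) n1' n2 NS subgroup.m_closed by metis
    have "g \<otimes> c \<otimes> inv g = (n \<otimes> (m \<otimes> n1 \<otimes> inv m) \<otimes> (x' \<otimes> inv n \<otimes> inv x')) \<otimes> x'"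
      using G1 x'G unfolding nm(3) nx(3) x'_def by (simp add: m_assoc inv_mult_group)
    thus "g \<otimes> c \<otimes> inv g \<in> ?C" using nn x'X unfolding set_mult_def by blast
  qed
  have NX: "subgroup (N \<inter> X0) G" using sub_inter NS X0S by blast
  obtain u where u: "card X0 = card (N \<inter> X0) * u" using card_sub_dvd[OF NX X0S] by blast
  have oddu: "odd u" using X0(2) u by simp
  have "card ?C * card (N \<inter> X0) = card N * card X0" using card_set_mult[OF NS X0S fin] .
  hence "card ?C * card (N \<inter> X0) = card N * u * card (N \<inter> X0)" using u by (metis mult.assoc mult.commute)
  moreover have nz: "card (N \<inter> X0) \<noteq> 0" using card_sub_pos[OF NX] by simp
  ultimately have cC: "card ?C = card N * u" using mult_right_cancel[OF nz] by blast
  have NC: "N \<subseteq> ?C" using mult_sub_left[OF NS X0S] .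
  have CM: "?C <#> M = carrier G"
  proof
    show "?C <#> M \<subseteq> carrier G" using CS MS subgroup.subset setmult_subset_G by metis
    show "carrier G \<subseteq> ?C <#> M" using GNM mono_set_mult[OF NC, of M M] by blast
  qed
  have CMi: "subgroup (?C \<inter> M) G" using sub_inter CS MS by blast
  have X0CM: "X0 \<subseteq> ?C \<inter> M" using mult_sub_right[OF NS X0S] X0sub by blast
  obtain t where t: "card (?C \<inter> M) = card X0 * t" using card_sub_dvd[OF X0S CMi X0CM] by blast
  have "card (carrier G) * card (?C \<inter> M) = card ?C * card M" using card_set_mult[OF CS MS fin] CM by simp
  hence "card X0 * (card (carrier G) * t) = card X0 * (card ?C * 2^k)" using t X0(3) by (simp add: ac_simps)
  hence e1: "card (carrier G) * t = card ?C * 2^k" using card_sub_pos[OF X0S] by simp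
  obtain v where v: "card (carrier G) = card ?C * v" using card_sub_dvd_G[OF CS] by blast
  have "card ?C * (v * t) = card ?C * 2^k" using e1 v by (simp add: ac_simps)
  hence "v * t = 2^k" using card_sub_pos[OF CS] by simp
  hence "v dvd 2^k" by (metis dvd_triv_left)
  then obtain k2 where k2: "v = 2^k2" using dvd_two_pow by blast
  show ?thesis unfolding chain_from_def
  proof (intro exI conjI)
    show "K \<lhd> G" "N \<lhd> G" "?C \<lhd> G" by (fact K, fact N, fact Cn)
    show "K \<subseteq> K" "K \<subseteq> N" "N \<subseteq> ?C" by (fact order_refl, fact KN, fact NC)
    show "odd (1::nat)" "card K = card K * 1" by simp_all
    show "card N = card K * 2^kN" by (fact cN)
    show "odd u" "card ?C = card N * u" by (fact oddu, fact cC)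
    show "card (carrier G) = card ?C * 2^k2" using v k2 by simp
  qed
qed

end


context fgroup begin

lemma max_join:
  assumes N: "N \<lhd> G" and M: "maximal_subgroup M G" and NM: "\<not> N \<subseteq> M"
  shows "N <#> M = carrier G"
proof -
  have MS: "subgroup M G" using M unfolding maximal_subgroup_def by blast
  have NS: "subgroup N G" using N normal_imp_subgroup by auto
  have NMS: "subgroup (N <#> M) G" using normal_mult_sub[OF N MS] .
  have "N <#> M = M \<or> N <#> M = carrier G"
    using M mult_sub_right[OF NS MS] NMS unfolding maximal_subgroup_def by blast
  moreover have "N <#> M \<noteq> M" using mult_sub_left[OF NS MS] NM by blast
  ultimately show ?thesis by blast
qed

lemma in_join:
  assumes "N <#> M = carrier G" "g \<in> carrier G"
  obtains n m where "n \<in> N" "m \<in> M" "g = n \<otimes> m"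
proof -
  have "g \<in> N <#> M" using assms by simp
  thus ?thesis using that unfolding set_mult_def by blast
qed

lemma case_ib:
  assumes K: "K \<lhd> G" and N: "N \<lhd> G" and KN: "K \<subseteq> N" and cN: "card N = card K * 2^kN"
    and minN: "\<And>Y. Y \<lhd> G \<Longrightarrow> K \<subseteq> Y \<Longrightarrow> Y \<subseteq> N \<Longrightarrow> Y = K \<or> Y = N"
    and M: "maximal_subgroup M G" and KM: "K \<subseteq> M" and NM: "\<not> N \<subseteq> M"
    and pr: "Factorial_Ring.prime (card (rcosets M))"
    and A: "A \<lhd> G" and NA: "N \<subseteq> A" and cA: "card A = card N * mA" and oA: "odd mA" and AN: "A \<noteq> N"
  shows "\<exists>XX. XX \<lhd> G \<and> K \<subseteq> XX \<and> XX \<noteq> K \<and> (\<exists>m. odd m \<and> card XX = card K * m)"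
proof -
  have MS: "subgroup M G" using M unfolding maximal_subgroup_def by blast
  have NS: "subgroup N G" and KS: "subgroup K G" and AS: "subgroup A G"
    using N K A normal_imp_subgroup by auto
  have GNM: "N <#> M = carrier G" using max_join N M NM by blast
  let ?q = "card (rcosets M)"
  have lag: "?q * card M = card (carrier G)" using lagrange[OF MS] by (simp add: order_def)
  have NMi: "subgroup (N \<inter> M) G" using sub_inter NS MS by blast
  have pf: "card (carrier G) * card (N \<inter> M) = card N * card M" using card_set_mult[OF NS MS fin] GNM by simp
  have Mpos: "card M > 0" using card_sub_pos[OF MS] .
  have "(?q * card M) * card (N \<inter> M) = card N * card M" using pf unfolding lag[symmetric] .
  hence "card M * (?q * card (N \<inter> M)) = card M * card N" by (simp add: ac_simps)
  hence qN: "?q * card (N \<inter> M) = card N" using Mpos by simp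
  obtain t where t: "card (N \<inter> M) = card K * t" using card_sub_dvd[OF KS NMi] KN KM by blast
  have "card K * (?q * t) = card K * 2^kN" using qN t cN by (simp add: ac_simps)
  hence "?q * t = 2^kN" using card_sub_pos[OF KS] by simp
  hence "?q dvd 2^kN" by (metis dvd_triv_left)
  hence "?q dvd 2" using prime_dvd_power_nat[OF pr] by blast
  hence "?q \<le> 2" by (rule dvd_imp_le) simp
  moreover have "?q \<ge> 2" using prime_ge_2_nat[OF pr] .
  ultimately have q2: "?q = 2" by simp
  have cNM: "card N = 2 * card (N \<inter> M)" using qN q2 by simp
  have NMn: "N \<inter> M \<lhd> G"
    unfolding normal_inv_iff
  proof (intro conjI NMi ballI)
    fix g y assume g: "g \<in> carrier G" and y: "y \<in> N \<inter> M"
    obtain n m where nm: "n \<in> N" "m \<in> M" "g = n \<otimes> m" using in_join[OF GNM g] by blast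
    have G1: "n \<in> carrier G" "m \<in> carrier G" "y \<in> carrier G"
      using nm y NS MS subgroup.mem_carrier by (metis IntD1)+
    have "m \<otimes> y \<otimes> inv m \<in> N" using normal_conj[OF N G1(2)] y by blast
    moreover have "m \<otimes> y \<otimes> inv m \<in> M" using nm y MS by (meson IntD2 subgroup.m_closed subgroup.m_inv_closed)
    ultimately have y': "m \<otimes> y \<otimes> inv m \<in> N \<inter> M" by blast
    have "n \<otimes> (m \<otimes> y \<otimes> inv m) \<otimes> inv n \<in> N \<inter> M"
      using idx2_normal[OF NMi NS _ cNM nm(1) y'] by blast
    moreover have "g \<otimes> y \<otimes> inv g = n \<otimes> (m \<otimes> y \<otimes> inv m) \<otimes> inv n"
      using G1 unfolding nm(3) by (simp add: m_assoc inv_mult_group)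
    ultimately show "g \<otimes> y \<otimes> inv g \<in> N \<inter> M" by simp
  qed
  have "N \<inter> M = K" using minN[OF NMn] KN KM NM by blast
  hence cNK: "card N = 2 * card K" using cNM by simp
  have comm: "n \<otimes> y \<otimes> inv n \<otimes> inv y \<in> K" if n: "n \<in> N" and y: "y \<in> carrier G" for n y
  proof -
    have nG: "n \<in> carrier G" using n NS subgroup.mem_carrier by metis
    let ?z = "y \<otimes> inv n \<otimes> inv y"
    have e: "n \<otimes> y \<otimes> inv n \<otimes> inv y = n \<otimes> ?z" using nG y by (simp add: m_assoc)
    show ?thesis
    proof (cases "n \<in> K")
      case True
      have "inv n \<in> K" using True KS subgroup.m_inv_closed by metis
      hence "?z \<in> K" using normal_conj[OF K y] by blast
      thus ?thesis using e True KS subgroup.m_closed by metis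
    next
      case False
      have invnN: "inv n \<in> N" using n NS subgroup.m_inv_closed by metis
      have invnK: "inv n \<notin> K"
      proof
        assume "inv n \<in> K" hence "inv (inv n) \<in> K" using KS subgroup.m_inv_closed by metis
        thus False using False nG by simp
      qed
      have zN: "?z \<in> N" using normal_conj[OF N y invnN] .
      have zK: "?z \<notin> K"
      proof
        assume zK: "?z \<in> K"
        have "inv y \<otimes> ?z \<otimes> inv (inv y) \<in> K" using normal_conj[OF K inv_closed[OF y] zK] .
        moreover have "inv y \<otimes> ?z \<otimes> inv (inv y) = inv n" using y nG by (simp add: m_assoc)
        ultimately show False using invnK by simp
      qed
      have "?z \<otimes> inv (inv n) \<in> K" using idx2[OF KS NS KN cNK invnN invnK zN zK] .
      hence zn: "?z \<otimes> n \<in> K" using nG by simp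
      have "n \<otimes> (?z \<otimes> n) \<otimes> inv n \<in> K" using normal_conj[OF K nG zn] .
      moreover have "n \<otimes> (?z \<otimes> n) \<otimes> inv n = n \<otimes> ?z" using nG y by (simp add: m_assoc)
      ultimately show ?thesis using e by simp
    qed
  qed
  let ?X = "A \<inter> M"
  have XS: "subgroup ?X G" using sub_inter AS MS by blast
  have KX: "K \<subseteq> ?X" using KN NA KM by blast
  have Xn: "?X \<lhd> G"
    unfolding normal_inv_iff
  proof (intro conjI XS ballI)
    fix g x assume g: "g \<in> carrier G" and x: "x \<in> ?X"
    obtain n m where nm: "n \<in> N" "m \<in> M" "g = n \<otimes> m" using in_join[OF GNM g] by blast
    have G1: "n \<in> carrier G" "m \<in> carrier G" "x \<in> carrier G"
      using nm x NS MS subgroup.mem_carrier by (metis IntD2)+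
    let ?x' = "m \<otimes> x \<otimes> inv m"
    have "?x' \<in> A" using normal_conj[OF A G1(2)] x by blast
    moreover have "?x' \<in> M" using nm x MS by (meson IntD2 subgroup.m_closed subgroup.m_inv_closed)
    ultimately have x': "?x' \<in> ?X" by blast
    have x'G: "?x' \<in> carrier G" using G1 by simp
    have "n \<otimes> ?x' \<otimes> inv n \<otimes> inv ?x' \<in> ?X" using comm[OF nm(1) x'G] KX by blast
    hence "(n \<otimes> ?x' \<otimes> inv n \<otimes> inv ?x') \<otimes> ?x' \<in> ?X" using x' XS subgroup.m_closed by metis
    moreover have "g \<otimes> x \<otimes> inv g = (n \<otimes> ?x' \<otimes> inv n \<otimes> inv ?x') \<otimes> ?x'"
      using G1 unfolding nm(3) by (simp add: m_assoc inv_mult_group)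
    ultimately show "g \<otimes> x \<otimes> inv g \<in> ?X" by simp
  qed
  have AM: "A <#> M = carrier G"
  proof
    show "A <#> M \<subseteq> carrier G" using AS MS subgroup.subset setmult_subset_G by metis
    show "carrier G \<subseteq> A <#> M" using GNM mono_set_mult[OF NA, of M M] by blast
  qed
  have pf2: "card (carrier G) * card ?X = card A * card M" using card_set_mult[OF AS MS fin] AM by simp
  have lag2: "card (carrier G) = 2 * card M" using lag q2 by simp
  have "2 * card M * card ?X = card N * mA * card M" using pf2 unfolding lag2 cA .
  hence e2: "2 * card M * card ?X = 2 * card K * mA * card M" unfolding cNK .
  have "card M * (2 * card ?X) = 2 * card M * card ?X" by (simp add: ac_simps)
  also have "\<dots> = 2 * card K * mA * card M" by (fact e2)
  also have "\<dots> = card M * (2 * (card K * mA))" by (simp add: ac_simps)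
  finally have "card M * (2 * card ?X) = card M * (2 * (card K * mA))" .
  hence cX: "card ?X = card K * mA" using Mpos by simp
  have "mA \<noteq> 1"
  proof
    assume "mA = 1"
    hence "card A = card N" using cA by simp
    hence "N = A" using sub_card_eq[OF AS NA] by simp
    thus False using AN by simp
  qed
  hence "card ?X \<noteq> card K" using cX card_sub_pos[OF KS] by simp
  hence "?X \<noteq> K" by blast
  thus ?thesis using Xn KX cX oA by blast
qed

end


context fgroup begin

lemma case_ii:
  assumes solv: "solvable G" and K: "K \<lhd> G" and N: "N \<lhd> G" and KN: "K \<subseteq> N"
    and cN: "card N = card K * 2^kN"
    and allmax: "\<And>M. maximal_subgroup M G \<Longrightarrow> K \<subseteq> M \<Longrightarrow> N \<subseteq> M"
    and A: "A \<lhd> G" and NA: "N \<subseteq> A" and cA: "card A = card N * mA" and oA: "odd mA" and AN: "A \<noteq> N"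
  shows "\<exists>XX. XX \<lhd> G \<and> K \<subseteq> XX \<and> XX \<noteq> K \<and> (\<exists>m. odd m \<and> card XX = card K * m)"
proof -
  have NS: "subgroup N G" and KS: "subgroup K G" and AS: "subgroup A G"
    using N K A normal_imp_subgroup by auto
  let ?W = "{Y. Y \<lhd> G \<and> N \<subseteq> Y \<and> Y \<noteq> N \<and> Y \<subseteq> A}"
  have finW: "finite ?W"
  proof (rule finite_subset[of _ "Pow (carrier G)"])
    show "?W \<subseteq> Pow (carrier G)" using normal_imp_subgroup subgroup.subset by blast
  qed (use fin in simp)
  have "A \<in> ?W" using A NA AN by simp
  hence neW: "?W \<noteq> {}" by blast
  have "Min (card ` ?W) \<in> card ` ?W" using finW neW by (intro Min_in) auto
  then obtain W where Wm: "W \<in> ?W" "card W = Min (card ` ?W)" by (rule imageE) simp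
  have Wmin: "card W \<le> card Y" if "Y \<in> ?W" for Y
  proof -
    have "card Y \<in> card ` ?W" using that by blast
    thus ?thesis using Wm(2) finW by simp
  qed
  have W: "W \<lhd> G" and NW: "N \<subseteq> W" "N \<noteq> W" and WA: "W \<subseteq> A" using Wm(1) by auto
  have WS: "subgroup W G" using W normal_imp_subgroup by blast
  have minW: "Y = N \<or> Y = W" if Y: "Y \<lhd> G" "N \<subseteq> Y" "Y \<subseteq> W" for Y
  proof (cases "Y = N")
    case False
    hence "Y \<in> ?W" using Y WA by auto
    hence cY: "card W \<le> card Y" using Wmin by blast
    have "Y = W" using card_seteq[OF sub_finite[OF WS] Y(3) cY] .
    thus ?thesis by simp
  qed simp
  obtain r k where rk: "Factorial_Ring.prime r" "k > 0" "card W = card N * r^k"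
    using minover_ppow[OF solv N W NW(1) NW(2) minW] by blast
  have r: "Factorial_Ring.prime r" using rk by simp
  obtain t where t: "card A = card W * t" using card_sub_dvd[OF WS AS WA] by blast
  have "card N * mA = card A" using cA by simp
  also have "\<dots> = card W * t" by (fact t)
  also have "\<dots> = card N * (r^k * t)" using rk(3) by (simp add: mult.assoc)
  finally have "card N * mA = card N * (r^k * t)" .
  hence "mA = r^k * t" using card_sub_pos[OF NS] by simp
  hence "r dvd mA" using rk(2) by (simp add: dvd_power)
  hence oddr: "odd r" using oA by (metis dvd_trans)
  have cW0: "card W \<noteq> 0" using card_sub_pos[OF WS] by simp
  have nur: "\<not> is_unit r" using r not_prime_unit by blast
  obtain m where m: "card W = r ^ multiplicity r (card W) * m" "\<not> r dvd m"
    using multiplicity_decompose'[where x="card W" and p=r] cW0 nur by blast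
  define a where "a = multiplicity r (card W)"
  have m': "card W = r^a * m" using m(1) unfolding a_def .
  obtain S where S: "subgroup S G" "S \<subseteq> W" "card S = r^a"
    using sylow_exists[OF WS r m'] by blast
  have SG: "S \<subseteq> carrier G" using S(1) subgroup.subset by blast
  have NSS: "subgroup (N <#> S) G" using normal_mult_sub[OF N S(1)] .
  have NSW: "N <#> S \<subseteq> W" using mult_sub_le[OF WS NW(1) S(2)] .
  obtain t' where t': "card W = card (N <#> S) * t'" using card_sub_dvd[OF NSS WS NSW] by blast
  obtain j where j: "card (N <#> S) = r^a * j"
    using card_sub_dvd[OF S(1) NSS mult_sub_right[OF NS S(1)]] S(3) by auto
  obtain u where u: "card (N <#> S) = card N * u"
    using card_sub_dvd[OF NS NSS mult_sub_left[OF NS S(1)]] by auto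
  have rpos: "r > 0" using r prime_gt_0_nat by blast
  have "r^a * m = card W" using m' by simp
  also have "\<dots> = card (N <#> S) * t'" by (fact t')
  also have "\<dots> = r^a * (j * t')" using j by (simp add: mult.assoc)
  finally have "r^a * m = r^a * (j * t')" .
  hence jm: "j * t' = m" using rpos by simp
  have "card N * r^k = card W" using rk(3) by simp
  also have "\<dots> = card (N <#> S) * t'" by (fact t')
  also have "\<dots> = card N * (u * t')" using u by (simp add: mult.assoc)
  finally have "card N * r^k = card N * (u * t')" .
  hence "u * t' = r^k" using card_sub_pos[OF NS] by simp
  hence "t' dvd r^k" by (metis dvd_triv_right)
  then obtain i where i: "t' = r^i" using divides_primepow_nat[OF r] by blast
  have "t' = 1"
  proof (rule ccontr)
    assume "t' \<noteq> 1"
    hence "i > 0" using i by (cases i) auto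
    hence "r dvd t'" using i by (simp add: dvd_power)
    hence "r dvd m" using jm by (metis dvd_mult)
    thus False using m(2) by blast
  qed
  hence "card (N <#> S) = card W" using t' by simp
  hence WNS: "N <#> S = W" using sub_card_eq[OF WS NSW] by simp
  let ?T = "K <#> S"
  have TS: "subgroup ?T G" using normal_mult_sub[OF K S(1)] .
  have TG: "?T \<subseteq> carrier G" using TS subgroup.subset by blast
  have normT: "x \<in> nrm ?T" if x: "x \<in> carrier G" and xS: "conjs x S = S" for x
  proof -
    have "conjs x ?T = ?T"
    proof (rule conjs_sub_eq[OF TS x])
      fix y assume "y \<in> ?T"
      then obtain k1 s where ks: "k1 \<in> K" "s \<in> S" "y = k1 \<otimes> s" unfolding set_mult_def by blast
      have G1: "k1 \<in> carrier G" "s \<in> carrier G" using ks KS SG subgroup.mem_carrier by (metis subsetD)+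
      have "x \<otimes> k1 \<otimes> inv x \<in> K" using normal_conj[OF K x ks(1)] .
      moreover have "x \<otimes> s \<otimes> inv x \<in> S" using conj_mem[OF x ks(2)] xS by simp
      moreover have "x \<otimes> y \<otimes> inv x = (x \<otimes> k1 \<otimes> inv x) \<otimes> (x \<otimes> s \<otimes> inv x)"
        using G1 x unfolding ks(3) by (simp add: m_assoc)
      ultimately show "x \<otimes> y \<otimes> inv x \<in> ?T" unfolding set_mult_def by blast
    qed
    thus ?thesis unfolding nrm_def using x by simp
  qed
  have Ssn: "conjs s S = S" if "s \<in> S" for s
  proof (rule conjs_sub_eq[OF S(1)])
    show sG: "s \<in> carrier G" using that SG by blast
    fix y assume "y \<in> S"
    thus "s \<otimes> y \<otimes> inv s \<in> S" using that S(1) by (metis subgroup.m_closed subgroup.m_inv_closed)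
  qed
  have LS: "subgroup (nrm ?T) G" using nrm_sub[OF TG] .
  have KL: "K \<subseteq> nrm ?T"
  proof
    fix x assume xK: "x \<in> K"
    have x: "x \<in> carrier G" using xK KS subgroup.mem_carrier by metis
    have "conjs x ?T = ?T"
    proof (rule conjs_sub_eq[OF TS x])
      fix y assume "y \<in> ?T"
      then obtain k1 s where ks: "k1 \<in> K" "s \<in> S" "y = k1 \<otimes> s" unfolding set_mult_def by blast
      have G1: "k1 \<in> carrier G" "s \<in> carrier G" using ks KS SG subgroup.mem_carrier by (metis subsetD)+
      have "inv x \<in> K" using xK KS subgroup.m_inv_closed by metis
      hence "s \<otimes> inv x \<otimes> inv s \<in> K" using normal_conj[OF K G1(2)] by blast
      hence "x \<otimes> k1 \<otimes> (s \<otimes> inv x \<otimes> inv s) \<in> K" using xK ks(1) KS subgroup.m_closed by metis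
      moreover have "x \<otimes> y \<otimes> inv x = (x \<otimes> k1 \<otimes> (s \<otimes> inv x \<otimes> inv s)) \<otimes> s"
        using G1 x unfolding ks(3) by (simp add: m_assoc)
      ultimately show "x \<otimes> y \<otimes> inv x \<in> ?T" using ks(2) unfolding set_mult_def by blast
    qed
    thus "x \<in> nrm ?T" unfolding nrm_def using x by simp
  qed
  have frat: "carrier G \<subseteq> N <#> nrm ?T"
  proof
    fix g assume g: "g \<in> carrier G"
    have CS: "subgroup (conjs g S) G" using conjs_sub[OF S(1) g] .
    have CW: "conjs g S \<subseteq> W" unfolding conjs_def using normal_conj[OF W g] S(2) by blast
    have cC: "card (conjs g S) = r^a" using conjs_card[OF SG g] S(3) by simp
    obtain w where w: "w \<in> W" "conjs g S = conjs w S"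
      using sylow_conj[OF WS S(1) CS S(2) CW r S(3) cC m' m(2)] by blast
    have wG: "w \<in> carrier G" using w WS subgroup.mem_carrier by metis
    let ?h = "inv w \<otimes> g"
    have hG: "?h \<in> carrier G" using wG g by simp
    have "conjs ?h S = conjs (inv w) (conjs g S)" using conjs_comp[OF SG inv_closed[OF wG] g] by simp
    also have "\<dots> = conjs (inv w) (conjs w S)" using w by simp
    also have "\<dots> = S" using conjs_inv[OF SG wG refl SG] by simp
    finally have hL: "?h \<in> nrm ?T" using normT[OF hG] by simp
    obtain n s where ns: "n \<in> N" "s \<in> S" "w = n \<otimes> s" using w(1) WNS unfolding set_mult_def by blast
    have G1: "n \<in> carrier G" "s \<in> carrier G" using ns NS SG subgroup.mem_carrier by (metis subsetD)+
    have sL: "s \<in> nrm ?T" using normT[OF G1(2) Ssn[OF ns(2)]] .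
    have shL: "s \<otimes> ?h \<in> nrm ?T" using sL hL LS subgroup.m_closed by metis
    have "g = n \<otimes> (s \<otimes> ?h)" using G1 g wG unfolding ns(3) by (simp add: m_assoc inv_mult_group)
    thus "g \<in> N <#> nrm ?T" using ns(1) shL unfolding set_mult_def by blast
  qed
  have Lall: "nrm ?T = carrier G"
  proof (rule ccontr)
    assume ne: "nrm ?T \<noteq> carrier G"
    obtain M where M: "maximal_subgroup M G" "nrm ?T \<subseteq> M" using exists_maximal[OF LS ne] by blast
    have MS: "subgroup M G" using M(1) unfolding maximal_subgroup_def by blast
    have "N \<subseteq> M" using allmax[OF M(1)] KL M(2) by blast
    hence "N <#> nrm ?T \<subseteq> M" using mult_sub_le[OF MS _ M(2)] by blast
    hence "carrier G \<subseteq> M" using frat by blast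
    thus False using M(1) MS subgroup.subset unfolding maximal_subgroup_def by blast
  qed
  have Tn: "?T \<lhd> G"
    unfolding normal_inv_iff
  proof (intro conjI TS ballI)
    fix g y assume g: "g \<in> carrier G" and y: "y \<in> ?T"
    have "conjs g ?T = ?T" using g Lall unfolding nrm_def by blast
    thus "g \<otimes> y \<otimes> inv g \<in> ?T" using conj_mem[OF g y] by simp
  qed
  have KT: "K \<subseteq> ?T" using mult_sub_left[OF KS S(1)] .
  have KSi: "subgroup (K \<inter> S) G" using sub_inter KS S(1) by blast
  have "card (K \<inter> S) dvd r^a" using card_sub_dvd[OF KSi S(1)] S(3) by simp
  then obtain c where c: "c \<le> a" "card (K \<inter> S) = r ^ c" using divides_primepow_nat[OF r] by blast
  have "card ?T * card (K \<inter> S) = card K * card S" using card_set_mult[OF KS S(1) fin] .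
  also have "card K * card S = card K * r ^ (a - c) * r ^ c"
    using c S(3) by (simp add: mult.assoc power_add[symmetric])
  finally have "card ?T * card (K \<inter> S) = card K * r ^ (a - c) * r ^ c" .
  hence "card ?T * r ^ c = card K * r ^ (a - c) * r ^ c" using c by simp
  hence cT: "card ?T = card K * r ^ (a - c)" using rpos by simp
  have oT: "odd (r ^ (a - c))" using oddr by simp
  have "?T \<noteq> K"
  proof
    assume TK: "?T = K"
    have "S \<subseteq> K" using mult_sub_right[OF KS S(1)] TK by simp
    then obtain jj where jj: "card K = r^a * jj" using card_sub_dvd[OF S(1) KS] S(3) by auto
    have "r^a * m = card W" using m' by simp
    also have "\<dots> = card K * 2^kN * r^k" using rk(3) cN by simp
    also have "\<dots> = r^a * (jj * 2^kN * r^k)" using jj by (simp add: ac_simps)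
    finally have "r^a * m = r^a * (jj * 2^kN * r^k)" .
    hence "m = jj * 2^kN * r^k" using rpos by simp
    hence "r dvd m" using rk(2) by (simp add: dvd_power)
    thus False using m(2) by blast
  qed
  thus ?thesis using Tn KT cT oT by blast
qed

end


context fgroup begin

lemma chain_up:
  assumes ch: "chain_from XX" and KX: "K \<subseteq> XX" and cX: "card XX = card K * m0" and om: "odd m0"
  shows "chain_from K"
proof -
  obtain A B C m where ABC: "A \<lhd> G" "B \<lhd> G" "C \<lhd> G" "XX \<subseteq> A" "A \<subseteq> B" "B \<subseteq> C"
    "odd m" "card A = card XX * m" "\<exists>k. card B = card A * 2^k"
    "\<exists>m. odd m \<and> card C = card B * m" "\<exists>k. card (carrier G) = card C * 2^k"
    using ch unfolding chain_from_def by blast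
  have "card A = card K * (m0 * m)" using ABC(8) cX by (simp add: mult.assoc)
  moreover have "odd (m0 * m)" using om ABC(7) by simp
  ultimately show ?thesis unfolding chain_from_def using ABC KX by blast
qed

lemma chain_AN:
  assumes K: "K \<lhd> G" and KN: "K \<subseteq> N" and cN: "card N = card K * 2^kN"
    and B: "B \<lhd> G" and C: "C \<lhd> G" and NB: "N \<subseteq> B" and BC: "B \<subseteq> C"
    and cB: "card B = card N * 2^k" and cC: "odd m" "card C = card B * m"
    and cG: "card (carrier G) = card C * 2^k2"
  shows "chain_from K"
  unfolding chain_from_def
proof (intro exI conjI)
  show "K \<lhd> G" "B \<lhd> G" "C \<lhd> G" by (fact K, fact B, fact C)
  show "K \<subseteq> K" "K \<subseteq> B" "B \<subseteq> C" using KN NB BC by auto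
  show "odd (1::nat)" "card K = card K * 1" by simp_all
  show "card B = card K * 2^(kN + k)" using cB cN by (simp add: power_add mult.assoc)
  show "odd m" "card C = card B * m" by (fact cC(1), fact cC(2))
  show "card (carrier G) = card C * 2^k2" by (fact cG)
qed

lemma main_chain:
  assumes solv: "solvable G"
    and hyp: "\<And>M. maximal_subgroup M G \<Longrightarrow>
            two_nilpotent (G\<lparr>carrier := M\<rparr>) \<or> Factorial_Ring.prime (card (rcosets M))"
    and K0: "K \<lhd> G"
  shows "chain_from K"
  using K0
proof (induct "card (carrier G) - card K" arbitrary: K rule: less_induct)
  case less
  have K: "K \<lhd> G" using less.prems .
  have KS: "subgroup K G" using K normal_imp_subgroup by blast
  have IH: "chain_from XX" if X: "XX \<lhd> G" "K \<subseteq> XX" "XX \<noteq> K" for XX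
  proof -
    have XS: "subgroup XX G" using X normal_imp_subgroup by blast
    have "K \<subset> XX" using X by blast
    hence "card K < card XX" using psubset_card_mono[OF sub_finite[OF XS]] by blast
    moreover have "card XX \<le> card (carrier G)" using XS subgroup.subset fin card_mono by metis
    ultimately have "card (carrier G) - card XX < card (carrier G) - card K" by simp
    thus ?thesis using less.hyps X(1) by blast
  qed
  show ?case
  proof (cases "K = carrier G")
    case True
    have e1: "\<exists>m. odd m \<and> card (carrier G) = card K * m" using True by (intro exI[of _ 1]) simp
    have e2: "\<exists>k. card (carrier G) = card (carrier G) * 2^k" by (intro exI[of _ 0]) simp
    have e3: "\<exists>m. odd m \<and> card (carrier G) = card (carrier G) * m" by (intro exI[of _ 1]) simp
    show ?thesis unfolding chain_from_def using normal_self True e1 e2 e3 by blast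
  next
    case Kne: False
    show ?thesis
    proof (cases "\<exists>XX. XX \<lhd> G \<and> K \<subseteq> XX \<and> XX \<noteq> K \<and> (\<exists>m. odd m \<and> card XX = card K * m)")
      case True
      then obtain XX m where X: "XX \<lhd> G" "K \<subseteq> XX" "XX \<noteq> K" "odd m" "card XX = card K * m" by blast
      show ?thesis using chain_up[OF IH[OF X(1-3)] X(2) X(5) X(4)] .
    next
      case noodd: False
      let ?Y = "{Y. Y \<lhd> G \<and> K \<subseteq> Y \<and> Y \<noteq> K}"
      have finY: "finite ?Y"
      proof (rule finite_subset[of _ "Pow (carrier G)"])
        show "?Y \<subseteq> Pow (carrier G)" using normal_imp_subgroup subgroup.subset by blast
      qed (use fin in simp)
      have "carrier G \<in> ?Y" using normal_self Kne KS subgroup.subset by auto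
      hence neY: "?Y \<noteq> {}" by blast
      have "Min (card ` ?Y) \<in> card ` ?Y" using finY neY by (intro Min_in) auto
      then obtain N where Nm: "N \<in> ?Y" "card N = Min (card ` ?Y)" by (rule imageE) simp
      have Nmin: "card N \<le> card Y" if "Y \<in> ?Y" for Y
      proof -
        have "card Y \<in> card ` ?Y" using that by blast
        thus ?thesis using Nm(2) finY by simp
      qed
      have N: "N \<lhd> G" and KN: "K \<subseteq> N" "K \<noteq> N" using Nm(1) by auto
      have NS: "subgroup N G" using N normal_imp_subgroup by blast
      have minN: "Y = K \<or> Y = N" if Y: "Y \<lhd> G" "K \<subseteq> Y" "Y \<subseteq> N" for Y
      proof (cases "Y = K")
        case False
        hence "Y \<in> ?Y" using Y by auto
        hence cY: "card N \<le> card Y" using Nmin by blast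
        have "Y = N" using card_seteq[OF sub_finite[OF NS] Y(3) cY] .
        thus ?thesis by simp
      qed simp
      obtain r kN where rk: "Factorial_Ring.prime r" "kN > 0" "card N = card K * r^kN"
        using minover_ppow[OF solv K N KN(1) KN(2) minN] by blast
      have "even r"
      proof (rule ccontr)
        assume "odd r"
        hence "odd (r^kN)" by simp
        thus False using noodd N KN rk(3) by blast
      qed
      hence "2 dvd r" by simp
      hence r2: "r = 2" using rk(1) unfolding prime_nat_iff by (metis numeral_eq_one_iff semiring_norm(85))
      have cN: "card N = card K * 2^kN" using rk(3) r2 by simp
      obtain A B C mA kB mC kG where ABC: "A \<lhd> G" "B \<lhd> G" "C \<lhd> G" "N \<subseteq> A" "A \<subseteq> B" "B \<subseteq> C"
        "odd mA" "card A = card N * mA" "card B = card A * 2^kB"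
        "odd mC" "card C = card B * mC" "card (carrier G) = card C * 2^kG"
        using IH[OF N KN(1) KN(2)[symmetric]] unfolding chain_from_def by blast
      have AN_case: "chain_from K" if AN: "A = N"
      proof -
        have NB: "N \<subseteq> B" using ABC(5) AN by simp
        have cB: "card B = card N * 2^kB" using ABC(9) AN by simp
        show ?thesis using chain_AN[OF K KN(1) cN ABC(2) ABC(3) NB ABC(6) cB ABC(10) ABC(11) ABC(12)] .
      qed
      show ?thesis
      proof (cases "\<exists>M. maximal_subgroup M G \<and> K \<subseteq> M \<and> \<not> N \<subseteq> M")
        case True
        then obtain M where M: "maximal_subgroup M G" "K \<subseteq> M" "\<not> N \<subseteq> M" by blast
        from hyp[OF M(1)] show ?thesis
        proof
          assume "two_nilpotent (G\<lparr>carrier := M\<rparr>)"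
          thus ?thesis using case_ia[OF K N KN(1) cN M] by blast
        next
          assume pr: "Factorial_Ring.prime (card (rcosets M))"
          show ?thesis
          proof (cases "A = N")
            case True thus ?thesis using AN_case by blast
          next
            case False
            have "\<exists>XX. XX \<lhd> G \<and> K \<subseteq> XX \<and> XX \<noteq> K \<and> (\<exists>m. odd m \<and> card XX = card K * m)"
              using case_ib[OF K N KN(1) cN minN M pr ABC(1) ABC(4) ABC(8) ABC(7) False] by blast
            thus ?thesis using noodd by blast
          qed
        qed
      next
        case False
        hence allmax: "N \<subseteq> M" if "maximal_subgroup M G" "K \<subseteq> M" for M using that by blast
        show ?thesis
        proof (cases "A = N")
          case True thus ?thesis using AN_case by blast
        next
          case AN: False
          have "\<exists>XX. XX \<lhd> G \<and> K \<subseteq> XX \<and> XX \<noteq> K \<and> (\<exists>m. odd m \<and> card XX = card K * m)"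
            using case_ii[OF solv K N KN(1) cN allmax ABC(1) ABC(4) ABC(8) ABC(7) AN] by blast
          thus ?thesis using noodd by blast
        qed
      qed
    qed
  qed
qed

end

theorem theoremB:
  fixes G :: "('a, 'b) monoid_scheme"
  assumes "group G"
    and "finite (carrier G)"
    and "solvable G"
    and "\<And>M. maximal_subgroup M G \<Longrightarrow>
            two_nilpotent (G\<lparr>carrier := M\<rparr>) \<or> Factorial_Ring.prime (card (rcosets\<^bsub>G\<^esub> M))"
  shows "O_p'pp'p 2 G = carrier G"
proof -
  interpret fgroup G using assms(1,2) unfolding fgroup_def fgroup_axioms_def by blast
  have "chain_from {\<one>\<^bsub>G\<^esub>}" using main_chain[OF assms(3) assms(4) one_is_normal] by blast
  then obtain A B C m kB mC kG where ABC: "A \<lhd> G" "B \<lhd> G" "C \<lhd> G" "A \<subseteq> B" "B \<subseteq> C"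
    "odd m" "card A = card {\<one>\<^bsub>G\<^esub>} * m" "card B = card A * 2^kB"
    "odd mC" "card C = card B * mC" "card (carrier G) = card C * 2^kG"
    unfolding chain_from_def by blast
  have "odd (card A)" using ABC(6,7) by simp
  thus ?thesis using chain_imp_O[OF ABC(1-5) _ ABC(8) ABC(9) ABC(10) ABC(11)] by blast
qed


end
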